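(* Let $n\geq 3$ be an integer. Then for every $n$-vertex unicyclic graph $G$, $$n(US_n)\geq n(G)\geq n(UP_n).$$
   Context: A unicyclic graph is a connected graph containing exactly one cycle. A subtree of a graph $G$ is a subgraph of $G$ (a vertex set together with an edge set) that is a tree; two subtrees are different if they differ as subgraphs. $n(G)$ denotes the number of subtrees of $G$, where by convention the empty subtree is also counted (so there is exactly one subtree with $0$ vertices). $S_n$ is the $n$-vertex star and $P_n$ the $n$-vertex path. $US_n$ is the unicyclic graph obtained from $S_n$ by adding an edge joining two of its leaves. $UP_n$ is the unicyclic graph obtained by identifying a vertex of the triangle $C_3$ with an end vertex of $P_{n-2}$. *)

theory Defs
  imports Main
begin

definition simple_graph :: "'a set \<Rightarrow> 'a set set \<Rightarrow> bool" where
  "simple_graph V E \<longleftrightarrow> finite V \<and> (\<forall>e\<in>E. e \<subseteq> V \<and> card e = 2)"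

definition adj_rel :: "'a set set \<Rightarrow> ('a \<times> 'a) set" where
  "adj_rel E = {(x, y). {x, y} \<in> E}"

definition connected_graph :: "'a set \<Rightarrow> 'a set set \<Rightarrow> bool" where
  "connected_graph V E \<longleftrightarrow> V \<noteq> {} \<and> (\<forall>u\<in>V. \<forall>v\<in>V. (u, v) \<in> (adj_rel E)\<^sup>*)"

definition is_cycle :: "'a set set \<Rightarrow> 'a set set \<Rightarrow> bool" where
  "is_cycle E C \<longleftrightarrow> C \<noteq> {} \<and> C \<subseteq> E \<and> finite C \<and> connected_graph (\<Union>C) C \<and>
     (\<forall>v\<in>\<Union>C. card {e\<in>C. v \<in> e} = 2)"

definition is_tree :: "'a set \<Rightarrow> 'a set set \<Rightarrow> bool" where
  "is_tree V E \<longleftrightarrow> simple_graph V E \<and> connected_graph V E \<and> \<not> (\<exists>C. is_cycle E C)"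

definition unicyclic :: "'a set \<Rightarrow> 'a set set \<Rightarrow> bool" where
  "unicyclic V E \<longleftrightarrow> simple_graph V E \<and> connected_graph V E \<and> (\<exists>!C. is_cycle E C)"

definition subtrees :: "'a set \<Rightarrow> 'a set set \<Rightarrow> ('a set \<times> 'a set set) set" where
  "subtrees V E = {(W, F). W \<subseteq> V \<and> F \<subseteq> E \<and> ((W = {} \<and> F = {}) \<or> is_tree W F)}"

definition num_subtrees :: "'a set \<Rightarrow> 'a set set \<Rightarrow> nat" where
  "num_subtrees V E = card (subtrees V E)"

text \<open>US_n on vertices 0..n-1: star with centre 0, plus the edge {1,2}.\<close>
definition US_V :: "nat \<Rightarrow> nat set" where "US_V n = {0..<n}"
definition US_E :: "nat \<Rightarrow> nat set set" where
  "US_E n = {{0, i} | i. 1 \<le> i \<and> i < n} \<union> {{1, 2}}"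

text \<open>UP_n on vertices 0..n-1: triangle 0,1,2 with the path 2-3-...-(n-1) attached at 2.\<close>
definition UP_V :: "nat \<Rightarrow> nat set" where "UP_V n = {0..<n}"
definition UP_E :: "nat \<Rightarrow> nat set set" where
  "UP_E n = {{0, 1}, {1, 2}, {0, 2}} \<union> {{i, i + 1} | i. 2 \<le> i \<and> i + 1 < n}"

end

theory Submission
  imports Defs
begin

definition deg :: "'a set set \<Rightarrow> 'a \<Rightarrow> nat" where
  "deg E x = card {e\<in>E. x \<in> e}"

definition dropv :: "'a set set \<Rightarrow> 'a \<Rightarrow> 'a set set" where
  "dropv E v = {e\<in>E. v \<notin> e}"

definition tcount :: "'a set \<Rightarrow> 'a set set \<Rightarrow> 'a \<Rightarrow> nat" where
  "tcount V E x = card {p\<in>subtrees V E. x \<in> fst p}"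

lemma adj_iff[simp]: "(x,y) \<in> adj_rel E \<longleftrightarrow> {x,y} \<in> E"
  by (simp add: adj_rel_def)

lemma adj_sym: "(x,y) \<in> (adj_rel E)\<^sup>* \<Longrightarrow> (y,x) \<in> (adj_rel E)\<^sup>*"
proof (induction rule: rtrancl_induct)
  case base then show ?case by simp
next
  case (step y z)
  then have "(z,y) \<in> adj_rel E" by (simp add: insert_commute)
  then show ?case using step(3) by (meson converse_rtrancl_into_rtrancl)
qed

lemma rtrancl_map:
  assumes "(x,y) \<in> (adj_rel F)\<^sup>*"
    and "\<And>a b. {a,b} \<in> F \<Longrightarrow> (g a, g b) \<in> (adj_rel F')\<^sup>*"
  shows "(g x, g y) \<in> (adj_rel F')\<^sup>*"
  using assms(1)
proof (induction rule: rtrancl_induct)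
  case base then show ?case by simp
next
  case (step y z)
  then show ?case using assms(2)[of y z] by (meson adj_iff rtrancl_trans)
qed

lemma rtrancl_mono_adj: "F \<subseteq> F' \<Longrightarrow> (x,y) \<in> (adj_rel F)\<^sup>* \<Longrightarrow> (x,y) \<in> (adj_rel F')\<^sup>*"
proof -
  assume a: "F \<subseteq> F'" "(x,y) \<in> (adj_rel F)\<^sup>*"
  have "(id x, id y) \<in> (adj_rel F')\<^sup>*"
    by (rule rtrancl_map[OF a(2)]) (use a(1) in \<open>auto intro!: r_into_rtrancl\<close>)
  then show ?thesis by simp
qed

lemma first_edge:
  assumes "(x,y) \<in> (adj_rel F)\<^sup>*" "x \<noteq> y"
  shows "\<exists>z. {x,z} \<in> F"
  using assms by (induction rule: converse_rtrancl_induct) auto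

lemma card2_ex: "card e = 2 \<Longrightarrow> v \<in> e \<Longrightarrow> \<exists>a. a \<noteq> v \<and> e = {v,a}"
  by (metis card_2_iff empty_iff insert_commute insert_iff)

lemma card2_eq: "finite A \<Longrightarrow> card A = 2 \<Longrightarrow> x \<in> A \<Longrightarrow> y \<in> A \<Longrightarrow> x \<noteq> y \<Longrightarrow> A = {x,y}"
  by (metis card_2_iff doubleton_eq_iff insertE singletonD)

lemma simple_finE: "simple_graph V E \<Longrightarrow> finite E"
  unfolding simple_graph_def by (meson Pow_iff finite_Pow_iff finite_subset subsetI)

lemma finite_subtrees: "simple_graph V E \<Longrightarrow> finite (subtrees V E)"
proof -
  assume s: "simple_graph V E"
  have "subtrees V E \<subseteq> Pow V \<times> Pow E" unfolding subtrees_def by auto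
  moreover have "finite (Pow V \<times> Pow E)" using s simple_finE[OF s] unfolding simple_graph_def by auto
  ultimately show ?thesis by (rule finite_subset)
qed

lemma is_cycle_mono: "is_cycle F C \<Longrightarrow> F \<subseteq> F' \<Longrightarrow> is_cycle F' C"
  unfolding is_cycle_def by auto

lemma is_cycle_sub: "is_cycle F C \<Longrightarrow> C \<subseteq> F' \<Longrightarrow> is_cycle F' C"
  unfolding is_cycle_def by auto

lemma cycle_avoid:
  assumes "is_cycle F C" "{e\<in>F. v\<in>e} \<subseteq> {e0}" "e \<in> C"
  shows "v \<notin> e"
proof
  assume "v \<in> e"
  then have "v \<in> \<Union>C" using assms(3) by auto
  then have "card {e\<in>C. v \<in> e} = 2" using assms(1) unfolding is_cycle_def by auto
  moreover have "{e\<in>C. v \<in> e} \<subseteq> {e0}" using assms(1,2) unfolding is_cycle_def by auto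
  then have "card {e\<in>C. v \<in> e} \<le> 1" by (metis card.empty card.insert card_mono finite.emptyI finite.insertI empty_iff One_nat_def)
  ultimately show False by simp
qed

lemma conn_leaf_remove:
  assumes c: "connected_graph W F" and v: "v \<in> W" and u: "u \<in> W" "u \<noteq> v"
    and lf: "{e\<in>F. v\<in>e} \<subseteq> {{u,v}}"
  shows "connected_graph (W - {v}) (dropv F v)"
  unfolding connected_graph_def
proof (intro conjI ballI)
  show "W - {v} \<noteq> {}" using u by auto
next
  fix x y assume xy: "x \<in> W - {v}" "y \<in> W - {v}"
  define g where "g = (\<lambda>z. if z = v then u else z)"
  have "(x,y) \<in> (adj_rel F)\<^sup>*" using c xy unfolding connected_graph_def by auto
  then have "(g x, g y) \<in> (adj_rel (dropv F v))\<^sup>*"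
  proof (rule rtrancl_map)
    fix a b assume ab: "{a,b} \<in> F"
    show "(g a, g b) \<in> (adj_rel (dropv F v))\<^sup>*"
    proof (cases "v \<in> {a,b}")
      case True
      then have "{a,b} = {u,v}" using lf ab by auto
      then have "g a = g b" using True u unfolding g_def by (auto simp: doubleton_eq_iff)
      then show ?thesis by simp
    next
      case False
      then show ?thesis using ab unfolding g_def dropv_def by (auto intro!: r_into_rtrancl)
    qed
  qed
  then show "(x,y) \<in> (adj_rel (dropv F v))\<^sup>*" using xy unfolding g_def by auto
qed

lemma tree_add_leaf:
  assumes t: "is_tree W F" and u: "u \<in> W" and v: "v \<notin> W"
  shows "is_tree (insert v W) (insert {u,v} F)"
proof -
  have uv: "u \<noteq> v" using u v by auto
  have s: "simple_graph W F" and c: "connected_graph W F" and nc: "\<not> (\<exists>C. is_cycle F C)"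
    using t unfolding is_tree_def by auto
  have s': "simple_graph (insert v W) (insert {u,v} F)"
    using s u uv unfolding simple_graph_def by auto
  have c': "connected_graph (insert v W) (insert {u,v} F)"
    unfolding connected_graph_def
  proof (intro conjI ballI)
    show "insert v W \<noteq> {}" by simp
  next
    have key: "(u, z) \<in> (adj_rel (insert {u,v} F))\<^sup>*" if "z \<in> insert v W" for z
    proof (cases "z = v")
      case True then show ?thesis by (auto intro!: r_into_rtrancl)
    next
      case False
      then have "(u,z) \<in> (adj_rel F)\<^sup>*" using c u that unfolding connected_graph_def by auto
      then show ?thesis by (rule rtrancl_mono_adj[rotated]) auto
    qed
    fix x y assume "x \<in> insert v W" "y \<in> insert v W"
    then show "(x,y) \<in> (adj_rel (insert {u,v} F))\<^sup>*"
      using key adj_sym by (meson rtrancl_trans)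
  qed
  have nc': "\<not> (\<exists>C. is_cycle (insert {u,v} F) C)"
  proof
    assume "\<exists>C. is_cycle (insert {u,v} F) C"
    then obtain C where C: "is_cycle (insert {u,v} F) C" by blast
    have "{e\<in>insert {u,v} F. v\<in>e} \<subseteq> {{u,v}}" using s v unfolding simple_graph_def by auto
    then have "\<forall>e\<in>C. v \<notin> e" using cycle_avoid[OF C] by blast
    then have "C \<subseteq> F" using C unfolding is_cycle_def by auto
    then have "is_cycle F C" using C is_cycle_sub by blast
    then show False using nc by blast
  qed
  show ?thesis using s' c' nc' unfolding is_tree_def by auto
qed

lemma tree_remove_leaf:
  assumes t: "is_tree W F" and v: "v \<in> W" and W: "W \<noteq> {v}"
    and lf: "{e\<in>F. v\<in>e} \<subseteq> {{u,v}}" and uv: "u \<noteq> v"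
  shows "{u,v} \<in> F" "u \<in> W" "is_tree (W - {v}) (F - {{u,v}})"
proof -
  have s: "simple_graph W F" and c: "connected_graph W F" and nc: "\<not> (\<exists>C. is_cycle F C)"
    using t unfolding is_tree_def by auto
  obtain w where w: "w \<in> W" "w \<noteq> v" using W v by auto
  then have "(v,w) \<in> (adj_rel F)\<^sup>*" using c v unfolding connected_graph_def by auto
  then obtain z where "{v,z} \<in> F" using first_edge w by metis
  then show uvF: "{u,v} \<in> F" using lf by auto
  then show uW: "u \<in> W" using s unfolding simple_graph_def by auto
  have dF: "dropv F v = F - {{u,v}}" using lf unfolding dropv_def by auto
  have c': "connected_graph (W - {v}) (F - {{u,v}})"
    using conn_leaf_remove[OF c v uW uv lf] dF by simp
  have s': "simple_graph (W - {v}) (F - {{u,v}})"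
    using s lf unfolding simple_graph_def by auto
  have nc': "\<not> (\<exists>C. is_cycle (F - {{u,v}}) C)"
    using nc is_cycle_mono by (metis Diff_subset)
  show "is_tree (W - {v}) (F - {{u,v}})" using s' c' nc' unfolding is_tree_def by auto
qed

lemma tree_single: "is_tree {x} {}"
  unfolding is_tree_def simple_graph_def connected_graph_def is_cycle_def by auto

lemma tree_edges_sub: "is_tree W F \<Longrightarrow> e \<in> F \<Longrightarrow> e \<subseteq> W"
  unfolding is_tree_def simple_graph_def by auto

lemma tree_nonempty: "is_tree W F \<Longrightarrow> W \<noteq> {}"
  unfolding is_tree_def connected_graph_def by auto

lemma tree_singleton_edges: "is_tree {v} F \<Longrightarrow> F = {}"
proof (rule ccontr)
  assume t: "is_tree {v} F" and "F \<noteq> {}"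
  then obtain e where e: "e \<in> F" by auto
  then have "e \<subseteq> {v}" "card e = 2" using t unfolding is_tree_def simple_graph_def by auto
  then have "card e \<le> card {v}" by (intro card_mono) auto
  then show False using \<open>card e = 2\<close> by simp
qed

lemma subtrees_avoid:
  "{p\<in>subtrees V E. v \<notin> fst p} = subtrees (V - {v}) (dropv E v)"
proof (intro set_eqI iffI)
  fix p assume p: "p \<in> {p\<in>subtrees V E. v \<notin> fst p}"
  obtain W F where pWF: "p = (W,F)" by fastforce
  have "W \<subseteq> V" "F \<subseteq> E" "(W = {} \<and> F = {}) \<or> is_tree W F" "v \<notin> W"
    using p pWF unfolding subtrees_def by auto
  moreover have "F \<subseteq> dropv E v"
    using calculation tree_edges_sub unfolding dropv_def by blast
  ultimately show "p \<in> subtrees (V - {v}) (dropv E v)" using pWF unfolding subtrees_def by auto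
next
  fix p assume p: "p \<in> subtrees (V - {v}) (dropv E v)"
  then show "p \<in> {p\<in>subtrees V E. v \<notin> fst p}" unfolding subtrees_def dropv_def by auto
qed

lemma subtrees_del_edge:
  "subtrees V (E - {e}) = {p\<in>subtrees V E. e \<notin> snd p}"
  unfolding subtrees_def by auto

definition addleaf :: "'a \<Rightarrow> 'a \<Rightarrow> 'a set \<times> 'a set set \<Rightarrow> 'a set \<times> 'a set set" where
  "addleaf u v p = (insert v (fst p), insert {u,v} (snd p))"

lemma subtrees_leaf:
  assumes v: "v \<in> V" and u: "u \<in> V" "u \<noteq> v" and lf: "{e\<in>E. v\<in>e} = {{u,v}}"
  shows "{p\<in>subtrees V E. v \<in> fst p} =
         insert ({v},{}) (addleaf u v ` {p\<in>subtrees (V - {v}) (dropv E v). u \<in> fst p})"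
proof (intro set_eqI iffI)
  fix p assume p: "p \<in> {p\<in>subtrees V E. v \<in> fst p}"
  obtain W F where pWF: "p = (W,F)" by fastforce
  have WF: "W \<subseteq> V" "F \<subseteq> E" "is_tree W F" "v \<in> W"
    using p pWF unfolding subtrees_def by auto
  have lfF: "{e\<in>F. v\<in>e} \<subseteq> {{u,v}}" using lf WF(2) by blast
  show "p \<in> insert ({v},{}) (addleaf u v ` {p\<in>subtrees (V - {v}) (dropv E v). u \<in> fst p})"
  proof (cases "W = {v}")
    case True
    then have "F = {}" using tree_singleton_edges[of v F] WF(3) by simp
    then show ?thesis using True pWF by auto
  next
    case False
    note r = tree_remove_leaf[OF WF(3) WF(4) False lfF u(2)]
    have "F - {{u,v}} \<subseteq> dropv E v" using WF(2) lfF unfolding dropv_def by auto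
    moreover have "W - {v} \<subseteq> V - {v}" using WF by blast
    ultimately have "(W - {v}, F - {{u,v}}) \<in> {p\<in>subtrees (V - {v}) (dropv E v). u \<in> fst p}"
      using r(2,3) u(2) unfolding subtrees_def by simp
    moreover have "addleaf u v (W - {v}, F - {{u,v}}) = p"
      unfolding addleaf_def using pWF r(1) WF(4) by auto
    ultimately show ?thesis by blast
  qed
next
  fix p assume p: "p \<in> insert ({v},{}) (addleaf u v ` {p\<in>subtrees (V - {v}) (dropv E v). u \<in> fst p})"
  show "p \<in> {p\<in>subtrees V E. v \<in> fst p}"
  proof (cases "p = ({v},{})")
    case True
    then show ?thesis using v tree_single unfolding subtrees_def by auto
  next
    case False
    then obtain W F where WF: "(W,F) \<in> subtrees (V - {v}) (dropv E v)" "u \<in> W" and pq: "p = addleaf u v (W,F)"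
      using p by auto
    have W: "W \<subseteq> V - {v}" "F \<subseteq> dropv E v" "is_tree W F" using WF unfolding subtrees_def by auto
    have "is_tree (insert v W) (insert {u,v} F)" using tree_add_leaf[OF W(3) WF(2)] W(1) by auto
    moreover have "{u,v} \<in> E" using lf by blast
    moreover have "insert v W \<subseteq> V" using W(1) v by blast
    moreover have "insert {u,v} F \<subseteq> E" using W(2) \<open>{u,v} \<in> E\<close> unfolding dropv_def by blast
    ultimately show ?thesis using pq unfolding subtrees_def addleaf_def by simp
  qed
qed

lemma addleaf_inj:
  "inj_on (addleaf u v) {p\<in>subtrees (V - {v}) (dropv E v). P p}"
proof (rule inj_onI)
  fix p q assume p: "p \<in> {p\<in>subtrees (V - {v}) (dropv E v). P p}" and q: "q \<in> {p\<in>subtrees (V - {v}) (dropv E v). P p}"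
    and e: "addleaf u v p = addleaf u v q"
  have "v \<notin> fst p" "v \<notin> fst q" "{u,v} \<notin> snd p" "{u,v} \<notin> snd q"
    using p q unfolding subtrees_def dropv_def by auto
  then have "fst p = fst q" "snd p = snd q" using e unfolding addleaf_def
    by (metis Pair_inject insert_ident)+
  then show "p = q" by (simp add: prod_eq_iff)
qed

lemma addleaf_notsingle: "addleaf u v p \<noteq> ({v},{})"
  unfolding addleaf_def by auto

locale leafsetting =
  fixes V :: "'a set" and E :: "'a set set" and u v :: 'a
  assumes sg: "simple_graph V E" and v: "v \<in> V" and u: "u \<in> V" "u \<noteq> v"
    and lf: "{e\<in>E. v\<in>e} = {{u,v}}"
begin

abbreviation "H \<equiv> subtrees (V - {v}) (dropv E v)"

lemma sgH: "simple_graph (V - {v}) (dropv E v)"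
  using sg unfolding simple_graph_def dropv_def by auto

lemma finH: "finite H" using finite_subtrees[OF sgH] .
lemma finG: "finite (subtrees V E)" using finite_subtrees[OF sg] .

lemma card_filter_leaf:
  "card {p\<in>subtrees V E. v \<in> fst p \<and> Q p} =
   (if Q ({v},{}) then 1 else 0) + card {p\<in>H. u \<in> fst p \<and> Q (addleaf u v p)}"
proof -
  have "{p\<in>subtrees V E. v \<in> fst p \<and> Q p} = {p \<in> {p\<in>subtrees V E. v \<in> fst p}. Q p}" by auto
  also have "\<dots> = {p \<in> insert ({v},{}) (addleaf u v ` {p\<in>H. u \<in> fst p}). Q p}"
    using subtrees_leaf[OF v u lf] by simp
  also have "\<dots> = (if Q ({v},{}) then insert ({v},{}) else id) (addleaf u v ` {p\<in>H. u \<in> fst p \<and> Q (addleaf u v p)})"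
    (is "?L = ?R")
  proof (cases "Q ({v},{})")
    case True
    show ?thesis
    proof (intro set_eqI iffI)
      fix x assume "x \<in> ?L" then show "x \<in> ?R" using True by auto
    next
      fix x assume "x \<in> ?R" then show "x \<in> ?L" using True by auto
    qed
  next
    case False
    show ?thesis
    proof (intro set_eqI iffI)
      fix x assume "x \<in> ?L" then show "x \<in> ?R" using False by auto
    next
      fix x assume "x \<in> ?R" then show "x \<in> ?L" using False by auto
    qed
  qed
  finally have eq: "{p\<in>subtrees V E. v \<in> fst p \<and> Q p} = (if Q ({v},{}) then insert ({v},{}) else id) (addleaf u v ` {p\<in>H. u \<in> fst p \<and> Q (addleaf u v p)})" .
  have inj: "inj_on (addleaf u v) {p\<in>H. u \<in> fst p \<and> Q (addleaf u v p)}"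
    using addleaf_inj[of u v V E "\<lambda>p. u \<in> fst p \<and> Q (addleaf u v p)"] by simp
  have fin: "finite {p\<in>H. u \<in> fst p \<and> Q (addleaf u v p)}" using finH by auto
  have nin: "({v},{}) \<notin> addleaf u v ` {p\<in>H. u \<in> fst p \<and> Q (addleaf u v p)}"
    by (auto simp: addleaf_def)
  show ?thesis
    using eq card_image[OF inj] fin nin by (simp add: card_insert_if)
qed

lemma count_n: "num_subtrees V E = num_subtrees (V - {v}) (dropv E v) + 1 + tcount (V - {v}) (dropv E v) u"
proof -
  have "subtrees V E = {p\<in>subtrees V E. v \<notin> fst p} \<union> {p\<in>subtrees V E. v \<in> fst p \<and> True}" by auto
  moreover have "card ({p\<in>subtrees V E. v \<notin> fst p} \<union> {p\<in>subtrees V E. v \<in> fst p \<and> True}) =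
     card {p\<in>subtrees V E. v \<notin> fst p} + card {p\<in>subtrees V E. v \<in> fst p \<and> True}"
    by (rule card_Un_disjoint) (use finG in auto)
  ultimately show ?thesis
    unfolding num_subtrees_def tcount_def
    using card_filter_leaf[of "\<lambda>_. True"] subtrees_avoid[of V E v] by simp
qed

lemma count_tv: "tcount V E v = 1 + tcount (V - {v}) (dropv E v) u"
  using card_filter_leaf[of "\<lambda>_. True"] unfolding tcount_def by simp

lemma count_tx:
  assumes "x \<noteq> v"
  shows "tcount V E x = tcount (V - {v}) (dropv E v) x + card {p\<in>H. u \<in> fst p \<and> x \<in> fst p}"
proof -
  have "{p\<in>subtrees V E. x \<in> fst p} = {p\<in>subtrees V E. v \<notin> fst p \<and> x \<in> fst p} \<union> {p\<in>subtrees V E. v \<in> fst p \<and> x \<in> fst p}" by auto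
  moreover have "card ({p\<in>subtrees V E. v \<notin> fst p \<and> x \<in> fst p} \<union> {p\<in>subtrees V E. v \<in> fst p \<and> x \<in> fst p}) =
     card {p\<in>subtrees V E. v \<notin> fst p \<and> x \<in> fst p} + card {p\<in>subtrees V E. v \<in> fst p \<and> x \<in> fst p}"
    by (rule card_Un_disjoint) (use finG in auto)
  moreover have "{p\<in>subtrees V E. v \<notin> fst p \<and> x \<in> fst p} = {p\<in>H. x \<in> fst p}"
    using subtrees_avoid[of V E v] by blast
  moreover have "card {p\<in>subtrees V E. v \<in> fst p \<and> x \<in> fst p} = card {p\<in>H. u \<in> fst p \<and> x \<in> fst p}"
    using card_filter_leaf[of "\<lambda>p. x \<in> fst p"] assms by (simp add: addleaf_def)
  ultimately show ?thesis unfolding tcount_def by simp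
qed

lemma count_tx_le:
  assumes "x \<noteq> v"
  shows "tcount V E x \<le> 2 * tcount (V - {v}) (dropv E v) x"
proof -
  have "card {p\<in>H. u \<in> fst p \<and> x \<in> fst p} \<le> tcount (V - {v}) (dropv E v) x"
    unfolding tcount_def by (rule card_mono) (use finH in auto)
  then show ?thesis using count_tx[OF assms] by simp
qed

end

lemma deg_insert: "f \<notin> D \<Longrightarrow> finite D \<Longrightarrow> deg (insert f D) y = deg D y + (if y \<in> f then 1 else 0)"
proof -
  assume f: "f \<notin> D" "finite D"
  show ?thesis
  proof (cases "y \<in> f")
    case True
    then have "{e\<in>insert f D. y\<in>e} = insert f {e\<in>D. y\<in>e}" by auto
    then show ?thesis using True f unfolding deg_def by simp
  next
    case False
    then have "{e\<in>insert f D. y\<in>e} = {e\<in>D. y\<in>e}" by auto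
    then show ?thesis using False unfolding deg_def by simp
  qed
qed

lemma handshake:
  assumes "finite D" "finite S" "\<forall>f\<in>D. card f = 2 \<and> f \<subseteq> S"
  shows "(\<Sum>y\<in>S. deg D y) = 2 * card D"
  using assms
proof (induction D rule: finite_induct)
  case empty then show ?case by (simp add: deg_def)
next
  case (insert f D)
  have "(\<Sum>y\<in>S. deg (insert f D) y) = (\<Sum>y\<in>S. deg D y + (if y \<in> f then 1 else 0))"
    using deg_insert[OF insert(2,1)] by simp
  also have "\<dots> = (\<Sum>y\<in>S. deg D y) + (\<Sum>y\<in>S. (if y \<in> f then 1 else 0))"
    by (simp add: sum.distrib)
  also have "(\<Sum>y\<in>S. (if y \<in> f then 1 else 0)) = card (S \<inter> f)"
    using sum.inter_restrict[OF insert(4), of "\<lambda>_. 1::nat" f] by simp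
  also have "S \<inter> f = f" using insert(5) by auto
  finally show ?case using insert by simp
qed

lemma deg_pos: "finite F \<Longrightarrow> y \<in> \<Union>F \<Longrightarrow> deg F y \<ge> 1"
  unfolding deg_def
  by (metis (mono_tags, lifting) One_nat_def Suc_leI UnionE card_gt_0_iff empty_iff finite_subset mem_Collect_eq subsetI)

definition md2 :: "'a set set \<Rightarrow> bool" where
  "md2 F \<longleftrightarrow> F \<noteq> {} \<and> (\<forall>y\<in>\<Union>F. 2 \<le> deg F y)"

lemma forest_count:
  assumes "finite G" "\<forall>f\<in>G. card f = 2" "G \<noteq> {}" "\<forall>D\<subseteq>G. \<not> md2 D"
  shows "card G < card (\<Union>G)"
  using assms
proof (induction "card G" arbitrary: G rule: less_induct)
  case less
  have "\<not> md2 G" using less.prems by auto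
  then obtain y where y: "y \<in> \<Union>G" "deg G y < 2" using less.prems(3) unfolding md2_def by force
  have "deg G y \<ge> 1" using deg_pos[OF less.prems(1) y(1)] .
  then have "card {e\<in>G. y\<in>e} = 1" using y unfolding deg_def by simp
  then obtain e0 where e0: "{e\<in>G. y\<in>e} = {e0}" using card_1_singletonE by blast
  then have e0G: "e0 \<in> G" "y \<in> e0" by auto
  define G' where "G' = G - {e0}"
  have finU: "finite (\<Union>G)"
    using less.prems(1,2) by (metis card.infinite finite_Union zero_neq_numeral)
  have yG': "y \<notin> \<Union>G'" using e0 unfolding G'_def by auto
  have sub: "\<Union>G' \<subseteq> \<Union>G - {y}" using yG' unfolding G'_def by auto
  have cG: "card G = card G' + 1" unfolding G'_def
    using card_Suc_Diff1[OF less.prems(1) e0G(1)] by simp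
  show ?case
  proof (cases "G' = {}")
    case True
    then have "G = {e0}" using e0G unfolding G'_def by auto
    then show ?thesis using less.prems(2) by auto
  next
    case False
    have "card G' < card (\<Union>G')"
      by (rule less.hyps) (use less.prems False cG in \<open>auto simp: G'_def\<close>)
    moreover have "card (\<Union>G') \<le> card (\<Union>G - {y})" using sub finU by (simp add: card_mono)
    moreover have "card (\<Union>G - {y}) = card (\<Union>G) - 1" using y(1) finU by simp
    moreover have "card (\<Union>G) \<ge> 1" using y(1) finU by (metis One_nat_def Suc_leI card_gt_0_iff empty_iff)
    ultimately show ?thesis using cG by linarith
  qed
qed


lemma finite_Union2: "finite F \<Longrightarrow> \<forall>f\<in>F. card f = 2 \<Longrightarrow> finite (\<Union>F)"
  by (metis card.infinite finite_Union zero_neq_numeral)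

lemma reach_closed:
  assumes "(x,y) \<in> (adj_rel F)\<^sup>*" "{y,z} \<in> F"
  shows "(x,z) \<in> (adj_rel F)\<^sup>*"
  using assms by (meson adj_iff rtrancl.rtrancl_into_rtrancl)

lemma md2_cycle:
  assumes "finite F" "\<forall>f\<in>F. card f = 2" "md2 F"
  shows "\<exists>C. is_cycle F C"
  using assms
proof (induction "card F" arbitrary: F rule: less_induct)
  case less
  show ?case
  proof (cases "\<exists>D. D \<subset> F \<and> md2 D")
    case True
    then obtain D where D: "D \<subset> F" "md2 D" by blast
    have "finite D" using D less.prems(1) by (meson finite_subset psubset_imp_subset)
    moreover have "card D < card F" using D less.prems(1) by (simp add: psubset_card_mono)
    ultimately obtain C where "is_cycle D C" using less.hyps[of D] D less.prems(2) by blast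
    then show ?thesis using D is_cycle_mono by (metis psubset_imp_subset)
  next
    case False
    note fin = less.prems(1) and c2 = less.prems(2)
    have finU: "finite (\<Union>F)" using finite_Union2 fin c2 .
    have Fne: "F \<noteq> {}" and dge: "\<forall>y\<in>\<Union>F. 2 \<le> deg F y" using less.prems(3) unfolding md2_def by auto
    have d2: "\<forall>y\<in>\<Union>F. deg F y = 2"
    proof (rule ccontr)
      assume "\<not> (\<forall>y\<in>\<Union>F. deg F y = 2)"
      then obtain w where w: "w \<in> \<Union>F" "deg F w \<ge> 3" using dge by force
      then obtain e where e: "e \<in> F" "w \<in> e" by auto
      define G where "G = F - {e}"
      have "card {e\<in>F. w\<in>e} \<le> card F" by (rule card_mono[OF fin]) auto
      then have "card F \<ge> 3" using w(2) unfolding deg_def by linarith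
      then have cG: "card G = card F - 1" and "card G \<ge> 2" unfolding G_def using e fin by auto
      then have Gne: "G \<noteq> {}" by auto
      have "\<forall>D\<subseteq>G. \<not> md2 D" using False e unfolding G_def by blast
      then have "card G < card (\<Union>G)"
        using forest_count[of G] Gne fin c2 unfolding G_def by auto
      moreover have "card (\<Union>G) \<le> card (\<Union>F)" using finU unfolding G_def by (intro card_mono) auto
      ultimately have le: "card F \<le> card (\<Union>F)" using cG by linarith
      have hs: "(\<Sum>y\<in>\<Union>F. deg F y) = 2 * card F"
        using handshake[OF fin finU] c2 by auto
      have s1: "(\<Sum>y\<in>\<Union>F. deg F y) = deg F w + (\<Sum>y\<in>\<Union>F - {w}. deg F y)"
        using w(1) finU by (simp add: sum.remove)
      have s2: "(\<Sum>y\<in>\<Union>F - {w}. deg F y) \<ge> (\<Sum>y\<in>\<Union>F - {w}. 2)"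
        using dge by (intro sum_mono) auto
      have s3: "(\<Sum>y\<in>\<Union>F - {w}. (2::nat)) = 2 * (card (\<Union>F) - 1)"
        using w(1) finU by simp
      have s4: "card (\<Union>F) \<ge> 1" using w(1) finU by (metis One_nat_def Suc_leI card_gt_0_iff empty_iff)
      define A where "A = (\<Sum>y\<in>\<Union>F - {w}. deg F y)"
      define k where "k = card (\<Union>F)"
      have "2 * card F = deg F w + A" using hs s1 unfolding A_def by simp
      moreover have "A \<ge> 2 * (k - 1)" using s2 s3 unfolding A_def k_def by simp
      moreover have "k \<ge> 1" "card F \<le> k" using s4 le unfolding k_def by auto
      ultimately show False using w(2) by linarith
    qed
    obtain x where x: "x \<in> \<Union>F" using Fne c2 by (metis Union_empty_conv card.empty ex_in_conv zero_neq_numeral)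
    define R where "R = {y. (x,y) \<in> (adj_rel F)\<^sup>*}"
    define D where "D = {f\<in>F. f \<subseteq> R}"
    have edge_in: "f \<subseteq> R" if fy: "f \<in> F" "y \<in> f" "y \<in> R" for f y
    proof -
      have "card f = 2" using c2 fy(1) by auto
      then obtain z where z: "z \<noteq> y" "f = {y,z}" using card2_ex[of f y] fy(2) by blast
      have "(x,y) \<in> (adj_rel F)\<^sup>*" using fy(3) unfolding R_def by simp
      moreover have "{y,z} \<in> F" using z fy(1) by simp
      ultimately have "(x,z) \<in> (adj_rel F)\<^sup>*" by (rule reach_closed)
      then show ?thesis using z fy unfolding R_def by auto
    qed
    have "md2 D"
      unfolding md2_def
    proof (intro conjI ballI)
      obtain f where "f \<in> F" "x \<in> f" using x by auto
      moreover have "x \<in> R" unfolding R_def by simp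
      ultimately have "f \<in> D" using edge_in unfolding D_def by auto
      then show "D \<noteq> {}" by auto
    next
      fix y assume "y \<in> \<Union>D"
      then have yR: "y \<in> R" and yF: "y \<in> \<Union>F" unfolding D_def by auto
      have "{e\<in>D. y\<in>e} = {e\<in>F. y\<in>e}" using edge_in yR unfolding D_def by auto
      moreover have "2 \<le> deg F y" using dge yF by blast
      ultimately show "2 \<le> deg D y" unfolding deg_def by simp
    qed
    moreover have "D \<subseteq> F" unfolding D_def by auto
    ultimately have DF: "D = F" using False by blast
    have allR: "\<Union>F \<subseteq> R" using DF unfolding D_def by auto
    have conn: "connected_graph (\<Union>F) F"
      unfolding connected_graph_def
    proof (intro conjI ballI)
      show "\<Union>F \<noteq> {}" using x by auto
    next
      fix y z assume "y \<in> \<Union>F" "z \<in> \<Union>F"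
      then have "(x,y) \<in> (adj_rel F)\<^sup>*" "(x,z) \<in> (adj_rel F)\<^sup>*" using allR unfolding R_def by auto
      then show "(y,z) \<in> (adj_rel F)\<^sup>*" using adj_sym by (meson rtrancl_trans)
    qed
    have "is_cycle F F" unfolding is_cycle_def using Fne fin conn d2 by (auto simp: deg_def)
    then show ?thesis by blast
  qed
qed

lemma acyclic_count:
  assumes "finite G" "\<forall>f\<in>G. card f = 2" "G \<noteq> {}" "\<not> (\<exists>C. is_cycle G C)"
  shows "card G < card (\<Union>G)"
proof (rule forest_count[OF assms(1-3)], intro allI impI notI)
  fix D assume D: "D \<subseteq> G" "md2 D"
  then have "\<exists>C. is_cycle D C" using md2_cycle[of D] assms(1,2) by (meson finite_subset subset_iff)
  then show False using assms(4) D is_cycle_mono by metis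
qed

lemma cycle_minus_edge:
  assumes C: "is_cycle E C" and c2: "\<forall>f\<in>C. card f = 2" and e: "{a,b} \<in> C" and ab: "a \<noteq> b"
  shows "(a,b) \<in> (adj_rel (C - {{a,b}}))\<^sup>*"
proof (rule ccontr)
  assume nb: "(a,b) \<notin> (adj_rel (C - {{a,b}}))\<^sup>*"
  define C' where "C' = C - {{a,b}}"
  define R where "R = {y. (a,y) \<in> (adj_rel C')\<^sup>*}"
  have finC: "finite C" using C unfolding is_cycle_def by auto
  have finU: "finite (\<Union>C)" using finite_Union2[OF finC c2] .
  have deg2: "\<forall>y\<in>\<Union>C. card {e\<in>C. y\<in>e} = 2" using C unfolding is_cycle_def by auto
  have aR: "a \<in> R" unfolding R_def by simp
  have bR: "b \<notin> R" using nb unfolding R_def C'_def by simp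
  have RU: "R \<subseteq> \<Union>C"
  proof
    fix y assume "y \<in> R"
    then have "(a,y) \<in> (adj_rel C')\<^sup>*" unfolding R_def by simp
    then show "y \<in> \<Union>C"
    proof (induction rule: rtrancl_induct)
      case base then show ?case using e by auto
    next
      case (step y z) then show ?case unfolding C'_def by auto
    qed
  qed
  have finR: "finite R" using finite_subset[OF RU finU] .
  have edge_in: "f \<subseteq> R" if fy: "f \<in> C'" "y \<in> f" "y \<in> R" for f y
  proof -
    have "card f = 2" using c2 fy(1) unfolding C'_def by auto
    then obtain z where z: "z \<noteq> y" "f = {y,z}" using card2_ex[of f y] fy(2) by blast
    have "(a,y) \<in> (adj_rel C')\<^sup>*" using fy(3) unfolding R_def by simp
    moreover have "{y,z} \<in> C'" using z fy(1) by simp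
    ultimately have "(a,z) \<in> (adj_rel C')\<^sup>*" by (rule reach_closed)
    then show ?thesis using z fy unfolding R_def by auto
  qed
  define D where "D = {f\<in>C'. f \<subseteq> R}"
  have finD: "finite D" using finC unfolding D_def C'_def by auto
  have hs: "(\<Sum>y\<in>R. deg D y) = 2 * card D"
    by (rule handshake[OF finD finR]) (use c2 in \<open>auto simp: D_def C'_def\<close>)
  have dy: "deg D y + (if y = a then 1 else 0) = 2" if yR: "y \<in> R" for y
  proof -
    have yb: "y \<noteq> b" using yR bR by auto
    have e1: "{e\<in>D. y\<in>e} = {e\<in>C'. y\<in>e}" using edge_in yR unfolding D_def by auto
    have c: "card {e\<in>C. y\<in>e} = 2" using deg2 RU yR by auto
    show ?thesis
    proof (cases "y = a")
      case True
      then have "{e\<in>C. y\<in>e} = insert {a,b} {e\<in>C'. y\<in>e}" "{a,b} \<notin> {e\<in>C'. y\<in>e}"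
        using e unfolding C'_def by auto
      moreover have "finite {e\<in>C'. y\<in>e}" using finC unfolding C'_def by auto
      ultimately have "card {e\<in>C. y\<in>e} = card {e\<in>C'. y\<in>e} + 1" by simp
      then have "card {e\<in>C'. y\<in>e} + 1 = 2" using c by simp
      then show ?thesis using e1 True unfolding deg_def C'_def by simp
    next
      case False
      then have "{e\<in>C. y\<in>e} = {e\<in>C'. y\<in>e}" using yb unfolding C'_def by auto
      then show ?thesis using e1 c False unfolding deg_def by simp
    qed
  qed
  have "(\<Sum>y\<in>R. deg D y + (if y = a then 1 else 0)) = (\<Sum>y\<in>R. 2)"
    using dy by (intro sum.cong) auto
  moreover have "(\<Sum>y\<in>R. deg D y + (if y = a then 1 else (0::nat))) = (\<Sum>y\<in>R. deg D y) + 1"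
    using aR finR by (simp add: sum.distrib sum.If_cases Int_absorb1 Int_def)
  ultimately have "2 * card D + 1 = 2 * card R" using hs by simp
  then show False by presburger
qed

definition cyc_graph :: "'a set \<Rightarrow> 'a set set \<Rightarrow> bool" where
  "cyc_graph V E \<longleftrightarrow> simple_graph V E \<and> connected_graph V E \<and> (\<forall>x\<in>V. deg E x = 2)"

definition path_graph :: "'a set \<Rightarrow> 'a set set \<Rightarrow> bool" where
  "path_graph V E \<longleftrightarrow> is_tree V E \<and> (\<forall>x\<in>V. deg E x \<le> 2)"

lemma deg_two_edges:
  assumes fin: "finite E" and c2: "\<forall>f\<in>E. card f = 2" and d: "deg E x = 2"
  shows "\<exists>a b. a \<noteq> b \<and> a \<noteq> x \<and> b \<noteq> x \<and> {e\<in>E. x\<in>e} = {{x,a},{x,b}}"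
proof -
  obtain e1 e2 where e12: "e1 \<noteq> e2" "{e\<in>E. x\<in>e} = {e1,e2}"
    using d unfolding deg_def by (meson card_2_iff)
  then have "e1 \<in> E" "x \<in> e1" "e2 \<in> E" "x \<in> e2" by auto
  then obtain a b where "a \<noteq> x" "e1 = {x,a}" "b \<noteq> x" "e2 = {x,b}"
    using card2_ex c2 by metis
  then show ?thesis using e12 by auto
qed

lemma cg_basic:
  assumes "cyc_graph V E"
  shows "finite E" "\<forall>f\<in>E. card f = 2" "\<Union>E = V" "finite V"
proof -
  show fin: "finite E" using assms simple_finE unfolding cyc_graph_def by blast
  show "\<forall>f\<in>E. card f = 2" "finite V" using assms unfolding cyc_graph_def simple_graph_def by auto
  have "x \<in> \<Union>E" if "x \<in> V" for x
  proof -
    have "deg E x = 2" using assms that unfolding cyc_graph_def by auto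
    then have "{e\<in>E. x\<in>e} \<noteq> {}" unfolding deg_def by (metis card.empty zero_neq_numeral)
    then show ?thesis by auto
  qed
  moreover have "\<Union>E \<subseteq> V" using assms unfolding cyc_graph_def simple_graph_def by auto
  ultimately show "\<Union>E = V" by auto
qed

lemma cg_is_cycle: "cyc_graph V E \<Longrightarrow> is_cycle E E"
proof -
  assume cg: "cyc_graph V E"
  note b = cg_basic[OF cg]
  have "V \<noteq> {}" using cg unfolding cyc_graph_def connected_graph_def by auto
  then have "E \<noteq> {}" using b(3) by auto
  then show ?thesis using cg b unfolding is_cycle_def cyc_graph_def deg_def by auto
qed

lemma cg_unique:
  assumes cg: "cyc_graph V E" and C: "is_cycle E C"
  shows "C = E"
proof -
  note b = cg_basic[OF cg]
  have CE: "C \<subseteq> E" using C unfolding is_cycle_def by auto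
  have finC: "finite C" using C unfolding is_cycle_def by auto
  obtain f where f: "f \<in> C" using C unfolding is_cycle_def by auto
  then have "card f = 2" using b CE by auto
  then obtain x where x: "x \<in> f" by fastforce
  have key: "y \<in> \<Union>C \<and> {e\<in>E. y\<in>e} = {e\<in>C. y\<in>e}" if "y \<in> V" for y
  proof -
    have "(x,y) \<in> (adj_rel E)\<^sup>*" using cg that x f CE b(3) unfolding cyc_graph_def connected_graph_def by auto
    then show ?thesis
    proof (induction rule: rtrancl_induct)
      case base
      have xC: "x \<in> \<Union>C" using x f by auto
      have "card {e\<in>C. x\<in>e} = 2" using C xC unfolding is_cycle_def by auto
      moreover have "card {e\<in>E. x\<in>e} = 2" using cg x f CE b(3) unfolding cyc_graph_def deg_def by auto
      moreover have "{e\<in>C. x\<in>e} \<subseteq> {e\<in>E. x\<in>e}" using CE by auto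
      ultimately have "{e\<in>C. x\<in>e} = {e\<in>E. x\<in>e}" using b(1) by (metis (no_types, lifting) card_subset_eq finite_subset mem_Collect_eq subsetI)
      then show ?case using xC by simp
    next
      case (step y z)
      have "{y,z} \<in> C" using step by auto
      then have zC: "z \<in> \<Union>C" by auto
      have zV: "z \<in> V" using step(2) b(3) by auto
      have "card {e\<in>C. z\<in>e} = 2" using C zC unfolding is_cycle_def by auto
      moreover have "card {e\<in>E. z\<in>e} = 2" using cg zV unfolding cyc_graph_def deg_def by auto
      moreover have "{e\<in>C. z\<in>e} \<subseteq> {e\<in>E. z\<in>e}" using CE by auto
      ultimately have "{e\<in>C. z\<in>e} = {e\<in>E. z\<in>e}" using b(1) by (metis (no_types, lifting) card_subset_eq finite_subset mem_Collect_eq subsetI)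
      then show ?case using zC by simp
    qed
  qed
  have "E \<subseteq> C"
  proof
    fix e assume e: "e \<in> E"
    then have "card e = 2" using b by auto
    then obtain y where y: "y \<in> e" by fastforce
    then have "y \<in> V" using e b(3) by auto
    then have "e \<in> {e\<in>C. y\<in>e}" using key e y by blast
    then show "e \<in> C" by simp
  qed
  then show ?thesis using CE by auto
qed

lemma cg_acyclic_iff:
  assumes cg: "cyc_graph V E" and F: "F \<subseteq> E"
  shows "(\<exists>C. is_cycle F C) \<longleftrightarrow> F = E"
proof
  assume "\<exists>C. is_cycle F C"
  then obtain C where C: "is_cycle F C" by blast
  then have "is_cycle E C" using is_cycle_mono F by blast
  then have "C = E" using cg_unique[OF cg] by blast
  then show "F = E" using C F unfolding is_cycle_def by auto
next
  assume "F = E"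
  then show "\<exists>C. is_cycle F C" using cg_is_cycle[OF cg] by blast
qed

lemma tree_simple: "is_tree V E \<Longrightarrow> simple_graph V E"
  unfolding is_tree_def by simp

lemma other_elem:
  assumes "finite V" "card V \<ge> 2" "x \<in> V"
  shows "\<exists>y\<in>V. y \<noteq> x"
proof (rule ccontr)
  assume "\<not> (\<exists>y\<in>V. y \<noteq> x)"
  then have "V \<subseteq> {x}" by auto
  then have "card V \<le> 1" using card_mono[of "{x}" V] by simp
  then show False using assms(2) by simp
qed

lemma two_elems:
  assumes "finite V" "card V \<ge> 2"
  shows "\<exists>x y. x \<in> V \<and> y \<in> V \<and> x \<noteq> y"
proof -
  have "V \<noteq> {}" using assms(2) by auto
  then obtain x where "x \<in> V" by auto
  then show ?thesis using other_elem[OF assms] by blast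
qed

lemma tree_has_leaf:
  assumes t: "is_tree V E" and c: "card V \<ge> 2"
  shows "\<exists>v\<in>V. deg E v = 1"
proof -
  have s: "simple_graph V E" using t by (rule tree_simple)
  have fin: "finite E" using simple_finE[OF s] .
  have c2: "\<forall>f\<in>E. card f = 2" using s unfolding simple_graph_def by auto
  have "finite V" using s unfolding simple_graph_def by simp
  then obtain x y where xy: "x \<in> V" "y \<in> V" "x \<noteq> y" using two_elems c by blast
  have "(x,y) \<in> (adj_rel E)\<^sup>*" using t xy unfolding is_tree_def connected_graph_def by auto
  then obtain z where "{x,z} \<in> E" using first_edge xy(3) by metis
  then have Ene: "E \<noteq> {}" by auto
  have nc: "\<not> (\<exists>C. is_cycle E C)" using t unfolding is_tree_def by simp
  have "\<not> md2 E" using md2_cycle[OF fin c2] nc by blast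
  then obtain w where w: "w \<in> \<Union>E" "deg E w < 2" using Ene unfolding md2_def by force
  have "deg E w \<ge> 1" using deg_pos[OF fin w(1)] .
  moreover have "w \<in> V" using w(1) s unfolding simple_graph_def by auto
  ultimately show ?thesis using w(2) by (intro bexI[of _ w]) auto
qed

lemma leaf_nbr:
  assumes s: "simple_graph V E" and v: "v \<in> V" and d: "deg E v = 1"
  shows "\<exists>u. u \<in> V \<and> u \<noteq> v \<and> {e\<in>E. v\<in>e} = {{u,v}}"
proof -
  obtain e0 where e0: "{e\<in>E. v\<in>e} = {e0}" using d unfolding deg_def using card_1_singletonE by blast
  then have "e0 \<in> E" "v \<in> e0" by auto
  then have "card e0 = 2" "e0 \<subseteq> V" using s unfolding simple_graph_def by auto
  then obtain u where "u \<noteq> v" "e0 = {v,u}" using card2_ex \<open>v \<in> e0\<close> by metis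
  then show ?thesis using e0 \<open>e0 \<subseteq> V\<close> by (intro exI[of _ u]) (auto simp: insert_commute)
qed

lemma dropv_leaf: "{e\<in>E. v\<in>e} = {{u,v}} \<Longrightarrow> dropv E v = E - {{u,v}}"
  unfolding dropv_def by auto

lemma tree_leaf_del:
  assumes t: "is_tree V E" and v: "v \<in> V" and u: "u \<noteq> v" and lf: "{e\<in>E. v\<in>e} = {{u,v}}" and c: "card V \<ge> 2"
  shows "is_tree (V - {v}) (dropv E v)"
proof -
  have "V \<noteq> {v}" using c by auto
  then show ?thesis using tree_remove_leaf(3)[OF t v _ _ u] lf dropv_leaf[OF lf] by auto
qed

lemma deg_dropv_le: "finite E \<Longrightarrow> deg (dropv E v) x \<le> deg E x"
  unfolding deg_def dropv_def by (rule card_mono) auto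

lemma deg_dropv_nbr:
  assumes fin: "finite E" and lf: "{e\<in>E. v\<in>e} = {{u,v}}"
  shows "deg (dropv E v) u + 1 = deg E u"
proof -
  have "{e\<in>E. u\<in>e} = insert {u,v} {e\<in>dropv E v. u\<in>e}" using lf unfolding dropv_def by auto
  moreover have "{u,v} \<notin> {e\<in>dropv E v. u\<in>e}" unfolding dropv_def by auto
  moreover have "finite {e\<in>dropv E v. u\<in>e}" using fin unfolding dropv_def by auto
  ultimately show ?thesis unfolding deg_def by simp
qed

lemma subtrees_single: "subtrees {x} ({}::'a set set) = {({},{}), ({x},{})}"
proof (intro set_eqI iffI)
  fix p assume "p \<in> subtrees {x} {}"
  then obtain W where "p = (W,{})" "W \<subseteq> {x}" "W = {} \<or> is_tree W {}" unfolding subtrees_def by auto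
  then show "p \<in> {({},{}), ({x},({}::'a set set))}" by (metis insertCI subset_singletonD)
next
  fix p assume "p \<in> {({},{}), ({x},({}::'a set set))}"
  moreover have "is_tree {x} ({}::'a set set)" by (rule tree_single)
  ultimately show "p \<in> subtrees {x} {}" unfolding subtrees_def by auto
qed

lemma leafsetting_intro:
  "simple_graph V E \<Longrightarrow> v \<in> V \<Longrightarrow> u \<in> V \<Longrightarrow> u \<noteq> v \<Longrightarrow> {e\<in>E. v\<in>e} = {{u,v}} \<Longrightarrow> leafsetting V E u v"
  unfolding leafsetting_def by auto

lemma path_counts:
  "path_graph V E \<Longrightarrow> card V = m \<Longrightarrow>
    2 * num_subtrees V E = m * (m + 1) + 2 \<and> (\<forall>x\<in>V. deg E x \<le> 1 \<longrightarrow> tcount V E x = m)"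
proof (induction m arbitrary: V E)
  case 0
  then have t0: "is_tree V E" unfolding path_graph_def by simp
  then have "finite V" using tree_simple unfolding simple_graph_def by blast
  then have "V = {}" using 0 by simp
  then show ?case using t0 tree_nonempty by blast
next
  case (Suc m)
  have t: "is_tree V E" and dl: "\<forall>x\<in>V. deg E x \<le> 2" using Suc.prems unfolding path_graph_def by auto
  have s: "simple_graph V E" using tree_simple[OF t] .
  have fin: "finite E" using simple_finE[OF s] .
  show ?case
  proof (cases "m = 0")
    case True
    then obtain x where V: "V = {x}" using Suc.prems(2) card_1_singletonE by auto
    then have E: "E = {}" using tree_singleton_edges t by simp
    have st: "subtrees V E = {({},{}), ({x},{})}" using V E subtrees_single by simp
    have "{p\<in>{({},{}), ({x},{})}. x \<in> fst p} = {({x},({}::'a set set))}" by (rule set_eqI) auto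
    then have "{p\<in>subtrees V E. x \<in> fst p} = {({x},{})}" unfolding st .
    then show ?thesis using st True V unfolding num_subtrees_def tcount_def by simp
  next
    case False
    then have c2: "card V \<ge> 2" using Suc.prems(2) by simp
    have step: "num_subtrees V E = num_subtrees (V - {v}) (dropv E v) + 1 + tcount (V - {v}) (dropv E v) u
           \<and> tcount V E v = 1 + tcount (V - {v}) (dropv E v) u
           \<and> path_graph (V - {v}) (dropv E v) \<and> card (V - {v}) = m \<and> deg (dropv E v) u \<le> 1 \<and> u \<in> V - {v}"
      if v: "v \<in> V" and u: "u \<in> V" "u \<noteq> v" and lf: "{e\<in>E. v\<in>e} = {{u,v}}" for u v
    proof -
      interpret leafsetting V E u v using leafsetting_intro[OF s v u lf] .
      have "is_tree (V - {v}) (dropv E v)" using tree_leaf_del[OF t v u(2) lf c2] .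
      moreover have "\<forall>x\<in>V - {v}. deg (dropv E v) x \<le> 2" using dl deg_dropv_le[OF fin] by (meson DiffD1 le_trans)
      ultimately have pg: "path_graph (V - {v}) (dropv E v)" unfolding path_graph_def by simp
      have "deg (dropv E v) u + 1 = deg E u" using deg_dropv_nbr[OF fin lf] .
      then have "deg (dropv E v) u \<le> 1" using dl u by fastforce
      moreover have "card (V - {v}) = m" using Suc.prems(2) v by simp
      ultimately show ?thesis using count_n count_tv pg u by simp
    qed
    obtain v where v: "v \<in> V" "deg E v = 1" using tree_has_leaf[OF t c2] by blast
    obtain u where u: "u \<in> V" "u \<noteq> v" "{e\<in>E. v\<in>e} = {{u,v}}" using leaf_nbr[OF s v] by blast
    note st = step[OF v(1) u(1,2) u(3)]
    have IH: "2 * num_subtrees (V - {v}) (dropv E v) = m * (m + 1) + 2"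
       "tcount (V - {v}) (dropv E v) u = m"
      using Suc.IH[of "V - {v}" "dropv E v"] st by auto
    have A: "2 * num_subtrees V E = Suc m * (Suc m + 1) + 2"
      using st IH by simp
    have B: "tcount V E x = Suc m" if x: "x \<in> V" "deg E x \<le> 1" for x
    proof -
      have "x \<in> \<Union>E"
      proof -
        have "finite V" using s unfolding simple_graph_def by simp
        then obtain y where "y \<in> V" "y \<noteq> x" using other_elem[OF _ c2 x(1)] by blast
        moreover have "(x,y) \<in> (adj_rel E)\<^sup>*" using t x(1) calculation(1) unfolding is_tree_def connected_graph_def by auto
        ultimately obtain z where "{x,z} \<in> E" using first_edge by metis
        then show ?thesis by auto
      qed
      then have "deg E x = 1" using deg_pos[OF fin] x(2) by (meson le_antisym)
      then obtain w where w: "w \<in> V" "w \<noteq> x" "{e\<in>E. x\<in>e} = {{w,x}}" using leaf_nbr[OF s x(1)] by blast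
      note st2 = step[OF x(1) w(1,2) w(3)]
      have "tcount (V - {x}) (dropv E x) w = m" using Suc.IH[of "V - {x}" "dropv E x"] st2 by auto
      then show ?thesis using st2 by simp
    qed
    show ?thesis using A B by simp
  qed
qed

lemma n_split_vertex:
  assumes s: "simple_graph V E"
  shows "num_subtrees V E = num_subtrees (V - {v}) (dropv E v) + tcount V E v"
proof -
  have fin: "finite (subtrees V E)" using finite_subtrees[OF s] .
  have "subtrees V E = {p\<in>subtrees V E. v \<notin> fst p} \<union> {p\<in>subtrees V E. v \<in> fst p}" by auto
  moreover have "card ({p\<in>subtrees V E. v \<notin> fst p} \<union> {p\<in>subtrees V E. v \<in> fst p}) =
     card {p\<in>subtrees V E. v \<notin> fst p} + card {p\<in>subtrees V E. v \<in> fst p}"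
    by (rule card_Un_disjoint) (use fin in auto)
  ultimately show ?thesis unfolding num_subtrees_def tcount_def using subtrees_avoid[of V E v] by simp
qed

lemma n_split_edge:
  assumes s: "simple_graph V E"
  shows "num_subtrees V E = num_subtrees V (E - {e}) + card {p\<in>subtrees V E. e \<in> snd p}"
proof -
  have fin: "finite (subtrees V E)" using finite_subtrees[OF s] .
  have "subtrees V E = {p\<in>subtrees V E. e \<notin> snd p} \<union> {p\<in>subtrees V E. e \<in> snd p}" by auto
  moreover have "card ({p\<in>subtrees V E. e \<notin> snd p} \<union> {p\<in>subtrees V E. e \<in> snd p}) =
     card {p\<in>subtrees V E. e \<notin> snd p} + card {p\<in>subtrees V E. e \<in> snd p}"
    by (rule card_Un_disjoint) (use fin in auto)
  ultimately show ?thesis unfolding num_subtrees_def using subtrees_del_edge[of V E e] by simp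
qed

lemma cg_nbrs:
  assumes cg: "cyc_graph V E" and v: "v \<in> V"
  shows "\<exists>a b. a \<noteq> b \<and> a \<noteq> v \<and> b \<noteq> v \<and> a \<in> V \<and> b \<in> V \<and> {e\<in>E. v\<in>e} = {{v,a},{v,b}}"
proof -
  note bs = cg_basic[OF cg]
  have "deg E v = 2" using cg v unfolding cyc_graph_def by auto
  then obtain a b where ab: "a \<noteq> b" "a \<noteq> v" "b \<noteq> v" "{e\<in>E. v\<in>e} = {{v,a},{v,b}}"
    using deg_two_edges[OF bs(1) bs(2)] by blast
  then have "{v,a} \<in> E" "{v,b} \<in> E" by auto
  then have "a \<in> V" "b \<in> V" using bs(3) by auto
  then show ?thesis using ab by blast
qed

lemma deg_dropv_le1:
  assumes fin: "finite E" and e: "{v,a} \<in> E" and d: "deg E a \<le> 2"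
  shows "deg (dropv E v) a \<le> 1"
proof -
  have "{e\<in>dropv E v. a\<in>e} \<subseteq> {e\<in>E. a\<in>e} - {{v,a}}" unfolding dropv_def by auto
  then have "card {e\<in>dropv E v. a\<in>e} \<le> card ({e\<in>E. a\<in>e} - {{v,a}})"
    using fin by (intro card_mono) auto
  moreover have "card ({e\<in>E. a\<in>e} - {{v,a}}) = card {e\<in>E. a\<in>e} - 1"
    using e fin by (intro card_Diff_singleton) auto
  ultimately show ?thesis using d unfolding deg_def by simp
qed

lemma cg_minus_vertex:
  assumes cg: "cyc_graph V E" and v: "v \<in> V" and ab: "a \<noteq> b" "a \<noteq> v" "b \<noteq> v"
    and nb: "{e\<in>E. v\<in>e} = {{v,a},{v,b}}"
  shows "path_graph (V - {v}) (dropv E v)" "deg (dropv E v) a \<le> 1" "deg (dropv E v) b \<le> 1"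
proof -
  note bs = cg_basic[OF cg]
  have s: "simple_graph V E" and c: "connected_graph V E" and d2: "\<forall>x\<in>V. deg E x = 2"
    using cg unfolding cyc_graph_def by auto
  have vaE: "{v,a} \<in> E" and vbE: "{v,b} \<in> E" using nb by auto
  have aV: "a \<in> V" and bV: "b \<in> V" using vaE vbE bs(3) by auto
  define E1 where "E1 = E - {{v,a}}"
  have va1: "(v,a) \<in> (adj_rel E1)\<^sup>*"
    using cycle_minus_edge[OF cg_is_cycle[OF cg] bs(2) vaE ab(2)[symmetric]] unfolding E1_def by simp
  have c1: "connected_graph V E1"
    unfolding connected_graph_def
  proof (intro conjI ballI)
    show "V \<noteq> {}" using v by auto
  next
    fix x y assume xy: "x \<in> V" "y \<in> V"
    have "(x,y) \<in> (adj_rel E)\<^sup>*" using c xy unfolding connected_graph_def by auto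
    then have "(id x, id y) \<in> (adj_rel E1)\<^sup>*"
    proof (rule rtrancl_map)
      fix p q assume pq: "{p,q} \<in> E"
      show "(id p, id q) \<in> (adj_rel E1)\<^sup>*"
      proof (cases "{p,q} = {v,a}")
        case True
        then have "(p = v \<and> q = a) \<or> (p = a \<and> q = v)" by (simp add: doubleton_eq_iff)
        then show ?thesis using va1 adj_sym by auto
      next
        case False
        then have "{p,q} \<in> E1" using pq unfolding E1_def by simp
        then show ?thesis by (auto intro!: r_into_rtrancl)
      qed
    qed
    then show "(x,y) \<in> (adj_rel E1)\<^sup>*" by simp
  qed
  have lf1: "{e\<in>E1. v\<in>e} \<subseteq> {{b,v}}" using nb unfolding E1_def by (auto simp: insert_commute)
  have "connected_graph (V - {v}) (dropv E1 v)" by (rule conn_leaf_remove[OF c1 v bV ab(3) lf1])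
  moreover have "dropv E1 v = dropv E v" unfolding dropv_def E1_def by auto
  ultimately have cP: "connected_graph (V - {v}) (dropv E v)" by simp
  have sP: "simple_graph (V - {v}) (dropv E v)" using s unfolding simple_graph_def dropv_def by auto
  have ncP: "\<not> (\<exists>C. is_cycle (dropv E v) C)"
  proof
    assume "\<exists>C. is_cycle (dropv E v) C"
    then obtain C where C: "is_cycle (dropv E v) C" by blast
    then have "is_cycle E C" using is_cycle_mono unfolding dropv_def by (metis (no_types, lifting) mem_Collect_eq subsetI)
    then have "C = E" using cg_unique[OF cg] by blast
    then have "{v,a} \<in> dropv E v" using C vaE unfolding is_cycle_def by auto
    then show False unfolding dropv_def by auto
  qed
  have "\<forall>x\<in>V - {v}. deg (dropv E v) x \<le> 2" using d2 deg_dropv_le[OF bs(1)] by (metis DiffD1)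
  then show "path_graph (V - {v}) (dropv E v)" using sP cP ncP unfolding path_graph_def is_tree_def by simp
  show "deg (dropv E v) a \<le> 1" using deg_dropv_le1[OF bs(1) vaE] d2 aV by simp
  show "deg (dropv E v) b \<le> 1" using deg_dropv_le1[OF bs(1) vbE] d2 bV by simp
qed


lemma only_v_tree:
  assumes p: "p \<in> subtrees V E" "v \<in> fst p" and ne: "\<forall>e\<in>snd p. v \<notin> e" and a: "a \<noteq> v"
  shows "p = ({v},{})"
proof -
  obtain W F where pWF: "p = (W,F)" by fastforce
  have t: "is_tree W F" and vW: "v \<in> W" using p pWF unfolding subtrees_def by auto
  have lf: "{e\<in>F. v\<in>e} \<subseteq> {{a,v}}" using ne pWF by auto
  have "W = {v}"
  proof (rule ccontr)
    assume "W \<noteq> {v}"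
    then have "{a,v} \<in> F" using tree_remove_leaf(1)[OF t vW _ lf a] by simp
    then show False using ne pWF by auto
  qed
  moreover then have "F = {}" using tree_singleton_edges[of v F] t by simp
  ultimately show ?thesis using pWF by simp
qed

locale cgv =
  fixes V :: "'a set" and E :: "'a set set" and v a b :: 'a and k :: nat
  assumes cg: "cyc_graph V E" and v: "v \<in> V" and ab: "a \<noteq> b" "a \<noteq> v" "b \<noteq> v"
    and aV: "a \<in> V" and bV: "b \<in> V"
    and nb: "{e\<in>E. v\<in>e} = {{v,a},{v,b}}" and k: "card V = k"
begin

lemma s: "simple_graph V E" using cg unfolding cyc_graph_def by simp
lemma finST: "finite (subtrees V E)" using finite_subtrees[OF s] .
lemma vaE: "{v,a} \<in> E" using nb by auto
lemma vbE: "{v,b} \<in> E" using nb by auto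

lemma P: "path_graph (V - {v}) (dropv E v)" using cg_minus_vertex[OF cg v ab nb] by simp
lemma cardP: "card (V - {v}) = k - 1" using k v by simp
lemma tPa: "tcount (V - {v}) (dropv E v) a = k - 1"
  using path_counts[OF P cardP] cg_minus_vertex[OF cg v ab nb] aV ab by simp
lemma tPb: "tcount (V - {v}) (dropv E v) b = k - 1"
  using path_counts[OF P cardP] cg_minus_vertex[OF cg v ab nb] bV ab by simp

lemma del_one:
  assumes "c \<in> {a,b}" "d \<in> {a,b}" "c \<noteq> d"
  shows "card {p\<in>subtrees V E. v \<in> fst p \<and> {v,c} \<notin> snd p} = k"
proof -
  have sub: "subtrees V (E - {{v,c}}) = {p\<in>subtrees V E. {v,c} \<notin> snd p}" by (rule subtrees_del_edge)
  have s1: "simple_graph V (E - {{v,c}})" using s unfolding simple_graph_def by auto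
  have lf: "{e\<in>E - {{v,c}}. v\<in>e} = {{d,v}}" using nb assms ab by (auto simp: insert_commute)
  have dV: "d \<in> V" "d \<noteq> v" using assms aV bV ab by auto
  interpret leafsetting V "E - {{v,c}}" d v using leafsetting_intro[OF s1 v dV lf] .
  have "dropv (E - {{v,c}}) v = dropv E v" unfolding dropv_def by auto
  then have "tcount V (E - {{v,c}}) v = 1 + tcount (V - {v}) (dropv E v) d" using count_tv by simp
  also have "\<dots> = k"
  proof -
    have "finite V" using s unfolding simple_graph_def by simp
    then have "k \<ge> 1" using k v by (metis One_nat_def Suc_leI card_gt_0_iff empty_iff)
    moreover have "tcount (V - {v}) (dropv E v) d = k - 1" using assms(2) tPa tPb by auto
    ultimately show ?thesis by simp
  qed
  finally have "card {p\<in>subtrees V (E - {{v,c}}). v \<in> fst p} = k" unfolding tcount_def .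
  moreover have "{p\<in>subtrees V (E - {{v,c}}). v \<in> fst p} = {p\<in>subtrees V E. v \<in> fst p \<and> {v,c} \<notin> snd p}"
    unfolding sub by (rule set_eqI) auto
  ultimately show ?thesis by simp
qed

definition "S3 = {p\<in>subtrees V E. v \<in> fst p \<and> {v,a} \<in> snd p \<and> {v,b} \<in> snd p}"

lemma tv_decomp: "tcount V E v = k + (k - 1) + card S3"
proof -
  define S1 where "S1 = {p\<in>subtrees V E. v \<in> fst p \<and> {v,a} \<notin> snd p}"
  define S2 where "S2 = {p\<in>subtrees V E. v \<in> fst p \<and> {v,a} \<in> snd p \<and> {v,b} \<notin> snd p}"
  define S0 where "S0 = {p\<in>subtrees V E. v \<in> fst p \<and> {v,a} \<notin> snd p \<and> {v,b} \<notin> snd p}"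
  define T2 where "T2 = {p\<in>subtrees V E. v \<in> fst p \<and> {v,b} \<notin> snd p}"
  have c1: "card S1 = k" unfolding S1_def using del_one[of a b] ab by simp
  have cT2: "card T2 = k" unfolding T2_def using del_one[of b a] ab by simp
  have S0: "S0 = {({v},({}::'a set set))}"
  proof (intro set_eqI iffI)
    fix p assume p: "p \<in> S0"
    have "\<forall>e\<in>snd p. v \<notin> e"
    proof
      fix e assume e: "e \<in> snd p"
      have "snd p \<subseteq> E" using p unfolding S0_def subtrees_def by auto
      then have eE: "e \<in> E" using e by blast
      show "v \<notin> e"
      proof
        assume "v \<in> e"
        then have "e \<in> {e\<in>E. v\<in>e}" using eE by simp
        then have "e = {v,a} \<or> e = {v,b}" unfolding nb by simp
        moreover have "{v,a} \<notin> snd p" "{v,b} \<notin> snd p" using p unfolding S0_def by auto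
        ultimately show False using e by auto
      qed
    qed
    then show "p \<in> {({v},({}::'a set set))}" using only_v_tree[of p V E v a] p ab unfolding S0_def by auto
  next
    fix p assume "p \<in> {({v},({}::'a set set))}"
    moreover have "is_tree {v} ({}::'a set set)" by (rule tree_single)
    ultimately show "p \<in> S0" unfolding S0_def subtrees_def using v by auto
  qed
  have "T2 = S0 \<union> S2" unfolding T2_def S0_def S2_def by auto
  moreover have "card (S0 \<union> S2) = card S0 + card S2"
    by (rule card_Un_disjoint) (use finST in \<open>auto simp: S0_def S2_def\<close>)
  ultimately have c2: "card S2 = k - 1" using cT2 S0 by simp
  have "{p\<in>subtrees V E. v \<in> fst p} = S1 \<union> (S2 \<union> S3)" unfolding S1_def S2_def S3_def by auto
  moreover have "card (S1 \<union> (S2 \<union> S3)) = card S1 + (card S2 + card S3)"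
    using finST
    by (subst card_Un_disjoint; (subst card_Un_disjoint)?) (auto simp: S1_def S2_def S3_def)
  ultimately show ?thesis using c1 c2 unfolding tcount_def by simp
qed

lemma n_decomp: "num_subtrees V E = num_subtrees (V - {v}) (dropv E v) + k + (k - 1) + card S3"
  using n_split_vertex[OF s, of v] tv_decomp by simp

end

context cgv begin

lemma finE: "finite E" using cg_basic[OF cg] by simp
lemma c2E: "\<forall>f\<in>E. card f = 2" using cg_basic[OF cg] by simp
lemma UE: "\<Union>E = V" using cg_basic[OF cg] by simp
lemma finV: "finite V" using cg_basic[OF cg] by simp
lemma d2: "\<forall>x\<in>V. deg E x = 2" using cg unfolding cyc_graph_def by simp

lemma edges_at_eq:
  assumes "x \<in> V" "e1 \<in> E" "e2 \<in> E" "x \<in> e1" "x \<in> e2" "e1 \<noteq> e2"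
  shows "{e\<in>E. x\<in>e} = {e1,e2}"
proof -
  have "card {e\<in>E. x\<in>e} = 2" using d2 assms(1) unfolding deg_def by simp
  moreover have "finite {e\<in>E. x\<in>e}" using finE by simp
  moreover have "e1 \<in> {e\<in>E. x\<in>e}" "e2 \<in> {e\<in>E. x\<in>e}" using assms(2-5) by auto
  ultimately show ?thesis using card2_eq[of "{e\<in>E. x\<in>e}" e1 e2] assms(6) by simp
qed

lemma k3: "k \<ge> 3"
proof -
  have "{v,a,b} \<subseteq> V" using v aV bV by auto
  then have "card {v,a,b} \<le> k" using k finV by (metis card_mono)
  then show ?thesis using ab by simp
qed

lemma ab_in_tri:
  assumes abE: "{a,b} \<in> E"
  shows "V = {v,a,b}"
proof -
  have ea: "{e\<in>E. a\<in>e} = {{v,a},{a,b}}"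
    using edges_at_eq[OF aV vaE abE] ab by (auto simp: doubleton_eq_iff)
  have eb: "{e\<in>E. b\<in>e} = {{v,b},{a,b}}"
    using edges_at_eq[OF bV vbE abE] ab by (auto simp: doubleton_eq_iff)
  have reach: "y \<in> {v,a,b}" if "(v,y) \<in> (adj_rel E)\<^sup>*" for y
    using that
  proof (induction rule: rtrancl_induct)
    case base then show ?case by simp
  next
    case (step y z)
    then have yz: "{y,z} \<in> E" by simp
    consider "y = v" | "y = a" | "y = b" using step(3) by auto
    then show ?case
    proof cases
      case 1
      then have "{y,z} \<in> {e\<in>E. v\<in>e}" using yz by simp
      then have "{y,z} = {v,a} \<or> {y,z} = {v,b}" unfolding nb by simp
      then show ?thesis by (auto simp: doubleton_eq_iff)
    next
      case 2
      then have "{y,z} \<in> {e\<in>E. a\<in>e}" using yz by simp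
      then have "{y,z} = {v,a} \<or> {y,z} = {a,b}" unfolding ea by simp
      then show ?thesis by (auto simp: doubleton_eq_iff)
    next
      case 3
      then have "{y,z} \<in> {e\<in>E. b\<in>e}" using yz by simp
      then have "{y,z} = {v,b} \<or> {y,z} = {a,b}" unfolding eb by simp
      then show ?thesis by (auto simp: doubleton_eq_iff)
    qed
  qed
  have "V \<subseteq> {v,a,b}"
  proof
    fix y assume "y \<in> V"
    then have "(v,y) \<in> (adj_rel E)\<^sup>*" using cg v unfolding cyc_graph_def connected_graph_def by auto
    then show "y \<in> {v,a,b}" by (rule reach)
  qed
  then show ?thesis using v aV bV by auto
qed

lemma S3_tri:
  assumes abE: "{a,b} \<in> E"
  shows "card S3 = 1" "k = 3"
proof -
  have V3: "V = {v,a,b}" using ab_in_tri[OF abE] .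
  then show "k = 3" using k ab by simp
  have Esub: "E \<subseteq> {{v,a},{v,b},{a,b}}"
  proof
    fix e assume e: "e \<in> E"
    then have "card e = 2" "e \<subseteq> V" using s unfolding simple_graph_def by auto
    then obtain x y where xy: "x \<noteq> y" "e = {x,y}" by (meson card_2_iff)
    then have "x \<in> {v,a,b}" "y \<in> {v,a,b}" using \<open>e \<subseteq> V\<close> V3 by auto
    then show "e \<in> {{v,a},{v,b},{a,b}}" using xy by (auto simp: doubleton_eq_iff)
  qed
  have Eeq: "E = {{v,a},{v,b},{a,b}}" using Esub vaE vbE abE by auto
  have abne: "{a,b} \<noteq> {v,a}" "{a,b} \<noteq> {v,b}" using ab by (auto simp: doubleton_eq_iff)
  have "S3 = {(V, {{v,a},{v,b}})}"
  proof (intro set_eqI iffI)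
    fix p assume p: "p \<in> S3"
    obtain W F where pWF: "p = (W,F)" by fastforce
    have WF: "W \<subseteq> V" "F \<subseteq> E" "is_tree W F" "{v,a} \<in> F" "{v,b} \<in> F" "v \<in> W"
      using p pWF unfolding S3_def subtrees_def by auto
    have "F \<noteq> E" using WF(3) cg_acyclic_iff[OF cg WF(2)] unfolding is_tree_def by simp
    then have "{a,b} \<notin> F" using WF(2,4,5) Eeq by auto
    then have F: "F = {{v,a},{v,b}}" using WF(2,4,5) Eeq by auto
    have "a \<in> W" "b \<in> W" using WF(3) F tree_edges_sub by (metis insertCI subsetD)+
    then have "W = V" using WF(1,6) V3 by auto
    then show "p \<in> {(V, {{v,a},{v,b}})}" using pWF F by simp
  next
    fix p assume p: "p \<in> {(V, {{v,a},{v,b}})}"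
    have sg: "simple_graph V {{v,a},{v,b}}" using s vaE vbE unfolding simple_graph_def by auto
    have cn: "connected_graph V {{v,a},{v,b}}"
      unfolding connected_graph_def
    proof (intro conjI ballI)
      show "V \<noteq> {}" using v by auto
    next
      have hub: "(v,x) \<in> (adj_rel {{v,a},{v,b}})\<^sup>*" if "x \<in> V" for x
      proof (cases "x = v")
        case False
        then have "x = a \<or> x = b" using that V3 by auto
        then show ?thesis by (auto intro!: r_into_rtrancl)
      qed simp
      fix x y assume "x \<in> V" "y \<in> V"
      then show "(x,y) \<in> (adj_rel {{v,a},{v,b}})\<^sup>*" using hub adj_sym by (meson rtrancl_trans)
    qed
    have "{{v,a},{v,b}} \<noteq> E"
    proof
      assume "{{v,a},{v,b}} = E"
      then have "{a,b} \<in> {{v,a},{v,b}}" using abE by simp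
      then show False using abne by simp
    qed
    then have nc: "\<not> (\<exists>C. is_cycle {{v,a},{v,b}} C)" using cg_acyclic_iff[OF cg] vaE vbE by simp
    have "is_tree V {{v,a},{v,b}}" using sg cn nc unfolding is_tree_def by simp
    then show "p \<in> S3" using p v vaE vbE unfolding S3_def subtrees_def by auto
  qed
  then show "card S3 = 1" by simp
qed

end

locale cgv4 = cgv +
  assumes abE: "{a,b} \<notin> E"
begin

definition "E' = insert {a,b} (dropv E v)"

lemma edges_v: "e \<in> E \<Longrightarrow> v \<in> e \<Longrightarrow> e = {v,a} \<or> e = {v,b}"
proof -
  assume "e \<in> E" "v \<in> e"
  then have "e \<in> {e\<in>E. v\<in>e}" by simp
  then show "e = {v,a} \<or> e = {v,b}" unfolding nb by simp
qed

lemma ab_ne: "{a,b} \<noteq> {v,a}" "{a,b} \<noteq> {v,b}" "{v,a} \<noteq> {v,b}"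
  using ab by (auto simp: doubleton_eq_iff)

lemma E'_nov: "e \<in> E' \<Longrightarrow> v \<notin> e"
  unfolding E'_def dropv_def using ab by auto

lemma E'_minus: "E' - {{a,b}} = dropv E v"
  unfolding E'_def dropv_def using abE by auto

lemma cg': "cyc_graph (V - {v}) E'"
proof -
  have sg: "simple_graph (V - {v}) E'"
    using s ab aV bV unfolding simple_graph_def E'_def dropv_def by auto
  have cn: "connected_graph (V - {v}) E'"
    unfolding connected_graph_def
  proof (intro conjI ballI)
    show "V - {v} \<noteq> {}" using aV ab by auto
  next
    fix x y assume xy: "x \<in> V - {v}" "y \<in> V - {v}"
    define g where "g = (\<lambda>z. if z = v then a else z)"
    have "(x,y) \<in> (adj_rel E)\<^sup>*" using cg xy unfolding cyc_graph_def connected_graph_def by auto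
    then have "(g x, g y) \<in> (adj_rel E')\<^sup>*"
    proof (rule rtrancl_map)
      fix p q assume pq: "{p,q} \<in> E"
      show "(g p, g q) \<in> (adj_rel E')\<^sup>*"
      proof (cases "v \<in> {p,q}")
        case True
        then have "{p,q} = {v,a} \<or> {p,q} = {v,b}" using edges_v pq by blast
        then have "(p = v \<and> q = a) \<or> (p = a \<and> q = v) \<or> (p = v \<and> q = b) \<or> (p = b \<and> q = v)"
          by (auto simp: doubleton_eq_iff)
        moreover have "{a,b} \<in> E'" "{b,a} \<in> E'" unfolding E'_def by (auto simp: insert_commute)
        ultimately show ?thesis unfolding g_def using ab by (auto intro!: r_into_rtrancl)
      next
        case False
        then have "{p,q} \<in> E'" using pq unfolding E'_def dropv_def by auto
        moreover have "g p = p" "g q = q" using False unfolding g_def by auto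
        ultimately show ?thesis by (auto intro!: r_into_rtrancl)
      qed
    qed
    then show "(x,y) \<in> (adj_rel E')\<^sup>*" using xy unfolding g_def by auto
  qed
  have dg: "deg E' x = 2" if x: "x \<in> V - {v}" for x
  proof -
    have xV: "x \<in> V" and xv: "x \<noteq> v" using x by auto
    have finE': "finite E'" using finE unfolding E'_def dropv_def by auto
    show ?thesis
    proof (cases "x = a \<or> x = b")
      case True
      then obtain y where y: "(x = a \<and> y = b) \<or> (x = b \<and> y = a)" by blast
      have xy: "{x,y} = {a,b}" using y by auto
      have vx: "{v,x} \<in> E" using y vaE vbE by auto
      have eq: "{e\<in>E'. x\<in>e} = insert {a,b} ({e\<in>E. x\<in>e} - {{v,x}})"
      proof (intro set_eqI iffI)
        fix e assume e: "e \<in> {e\<in>E'. x\<in>e}"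
        show "e \<in> insert {a,b} ({e\<in>E. x\<in>e} - {{v,x}})"
        proof (cases "e = {a,b}")
          case False
          then have "e \<in> E" "v \<notin> e" "x \<in> e" using e unfolding E'_def dropv_def by auto
          then show ?thesis by auto
        qed simp
      next
        fix e assume e: "e \<in> insert {a,b} ({e\<in>E. x\<in>e} - {{v,x}})"
        show "e \<in> {e\<in>E'. x\<in>e}"
        proof (cases "e = {a,b}")
          case True then show ?thesis using y unfolding E'_def by auto
        next
          case False
          then have eE: "e \<in> E" "x \<in> e" "e \<noteq> {v,x}" using e by auto
          have "v \<notin> e"
          proof
            assume "v \<in> e"
            then have "e = {v,a} \<or> e = {v,b}" using edges_v eE(1) by blast
            then show False using eE y ab by (auto simp: doubleton_eq_iff)
          qed
          then show ?thesis using eE unfolding E'_def dropv_def by auto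
        qed
      qed
      have "{a,b} \<notin> {e\<in>E. x\<in>e} - {{v,x}}" using abE by auto
      moreover have "finite ({e\<in>E. x\<in>e} - {{v,x}})" using finE by auto
      moreover have "card ({e\<in>E. x\<in>e} - {{v,x}}) = 1"
      proof -
        have "card {e\<in>E. x\<in>e} = 2" using d2 xV unfolding deg_def by simp
        moreover have "{v,x} \<in> {e\<in>E. x\<in>e}" using vx by simp
        ultimately show ?thesis using finE by (simp add: card_Diff_singleton)
      qed
      ultimately show ?thesis unfolding deg_def eq by simp
    next
      case False
      have "{e\<in>E'. x\<in>e} = {e\<in>E. x\<in>e}"
      proof (intro set_eqI iffI)
        fix e assume e: "e \<in> {e\<in>E'. x\<in>e}"
        then have "e \<noteq> {a,b}" using False by auto
        then show "e \<in> {e\<in>E. x\<in>e}" using e unfolding E'_def dropv_def by auto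
      next
        fix e assume e: "e \<in> {e\<in>E. x\<in>e}"
        have "v \<notin> e"
        proof
          assume "v \<in> e"
          then have "e = {v,a} \<or> e = {v,b}" using edges_v e by blast
          then show False using e False xv by auto
        qed
        then show "e \<in> {e\<in>E'. x\<in>e}" using e unfolding E'_def dropv_def by auto
      qed
      then show ?thesis using d2 xV unfolding deg_def by simp
    qed
  qed
  show ?thesis using sg cn dg unfolding cyc_graph_def by blast
qed


definition psi :: "'a set \<times> 'a set set \<Rightarrow> 'a set \<times> 'a set set" where
  "psi p = (fst p - {v}, insert {a,b} (snd p - {{v,a},{v,b}}))"
definition chi :: "'a set \<times> 'a set set \<Rightarrow> 'a set \<times> 'a set set" where
  "chi p = (insert v (fst p), insert {v,a} (insert {v,b} (snd p - {{a,b}})))"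

definition "T' = {p\<in>subtrees (V - {v}) E'. {a,b} \<in> snd p}"

lemma psi_maps:
  assumes p: "p \<in> S3"
  shows "psi p \<in> T'"
proof -
  obtain W F where pWF: "p = (W,F)" by fastforce
  have WF: "W \<subseteq> V" "F \<subseteq> E" "is_tree W F" "{v,a} \<in> F" "{v,b} \<in> F" "v \<in> W"
    using p pWF unfolding S3_def subtrees_def by auto
  define W' where "W' = W - {v}"
  define F' where "F' = insert {a,b} (F - {{v,a},{v,b}})"
  have pp: "psi p = (W', F')" unfolding psi_def pWF W'_def F'_def by simp
  have Fnov: "v \<notin> e" if "e \<in> F - {{v,a},{v,b}}" for e
    using that WF(2) edges_v by blast
  have aW: "a \<in> W" and bW: "b \<in> W" using tree_edges_sub[OF WF(3) WF(4)] tree_edges_sub[OF WF(3) WF(5)] by auto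
  have F'E': "F' \<subseteq> E'" unfolding F'_def E'_def dropv_def using WF(2) Fnov by auto
  have sg: "simple_graph W' F'"
  proof -
    have "finite W" using WF(3) unfolding is_tree_def simple_graph_def by simp
    moreover have "\<forall>e\<in>F. e \<subseteq> W \<and> card e = 2" using WF(3) unfolding is_tree_def simple_graph_def by simp
    ultimately show ?thesis unfolding simple_graph_def W'_def F'_def using Fnov aW bW ab by auto
  qed
  have cn: "connected_graph W' F'"
    unfolding connected_graph_def
  proof (intro conjI ballI)
    show "W' \<noteq> {}" using aW ab unfolding W'_def by auto
  next
    fix x y assume xy: "x \<in> W'" "y \<in> W'"
    define g where "g = (\<lambda>z. if z = v then a else z)"
    have "(x,y) \<in> (adj_rel F)\<^sup>*" using WF(3) xy unfolding is_tree_def connected_graph_def W'_def by auto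
    then have "(g x, g y) \<in> (adj_rel F')\<^sup>*"
    proof (rule rtrancl_map)
      fix p q assume pq: "{p,q} \<in> F"
      show "(g p, g q) \<in> (adj_rel F')\<^sup>*"
      proof (cases "{p,q} = {v,a} \<or> {p,q} = {v,b}")
        case True
        then have "(p = v \<and> q = a) \<or> (p = a \<and> q = v) \<or> (p = v \<and> q = b) \<or> (p = b \<and> q = v)"
          by (auto simp: doubleton_eq_iff)
        moreover have "{a,b} \<in> F'" "{b,a} \<in> F'" unfolding F'_def by (auto simp: insert_commute)
        ultimately show ?thesis unfolding g_def using ab by (auto intro!: r_into_rtrancl)
      next
        case False
        then have "{p,q} \<in> F - {{v,a},{v,b}}" using pq by auto
        then have "v \<notin> {p,q}" "{p,q} \<in> F'" using Fnov unfolding F'_def by auto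
        moreover have "g p = p" "g q = q" using calculation(1) unfolding g_def by auto
        ultimately show ?thesis by (auto intro!: r_into_rtrancl)
      qed
    qed
    then show "(x,y) \<in> (adj_rel F')\<^sup>*" using xy unfolding g_def W'_def by auto
  qed
  have nc: "\<not> (\<exists>C. is_cycle F' C)"
  proof
    assume "\<exists>C. is_cycle F' C"
    then have "F' = E'" using cg_acyclic_iff[OF cg' F'E'] by simp
    have "E \<subseteq> F"
    proof
      fix e assume e: "e \<in> E"
      show "e \<in> F"
      proof (cases "v \<in> e")
        case True then show ?thesis using edges_v e WF(4,5) by blast
      next
        case False
        then have "e \<in> E'" using e unfolding E'_def dropv_def by auto
        then have "e \<in> F'" using \<open>F' = E'\<close> by simp
        moreover have "e \<noteq> {a,b}" using e abE by auto
        ultimately show ?thesis unfolding F'_def by auto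
      qed
    qed
    then have "F = E" using WF(2) by auto
    then have "\<exists>C. is_cycle F C" using cg_acyclic_iff[OF cg WF(2)] by simp
    then show False using WF(3) unfolding is_tree_def by simp
  qed
  have "is_tree W' F'" using sg cn nc unfolding is_tree_def by simp
  moreover have "W' \<subseteq> V - {v}" using WF(1) unfolding W'_def by auto
  moreover have "{a,b} \<in> F'" unfolding F'_def by simp
  ultimately show ?thesis unfolding T'_def subtrees_def pp using F'E' by simp
qed

lemma chi_maps:
  assumes p: "p \<in> T'"
  shows "chi p \<in> S3"
proof -
  obtain W' F' where pWF: "p = (W',F')" by fastforce
  have WF: "W' \<subseteq> V - {v}" "F' \<subseteq> E'" "is_tree W' F'" "{a,b} \<in> F'"
    using p pWF unfolding T'_def subtrees_def by auto
  define W where "W = insert v W'"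
  define F where "F = insert {v,a} (insert {v,b} (F' - {{a,b}}))"
  have pp: "chi p = (W, F)" unfolding chi_def pWF W_def F_def by simp
  have aW: "a \<in> W'" and bW: "b \<in> W'" using tree_edges_sub[OF WF(3) WF(4)] by auto
  have FE: "F \<subseteq> E"
  proof -
    have "F' - {{a,b}} \<subseteq> E" using WF(2) unfolding E'_def dropv_def by auto
    then show ?thesis unfolding F_def using vaE vbE by auto
  qed
  have sg: "simple_graph W F"
  proof -
    have "finite W'" using WF(3) unfolding is_tree_def simple_graph_def by simp
    moreover have "\<forall>e\<in>F'. e \<subseteq> W' \<and> card e = 2" using WF(3) unfolding is_tree_def simple_graph_def by simp
    ultimately show ?thesis unfolding simple_graph_def W_def F_def using aW bW ab by auto
  qed
  have cn: "connected_graph W F"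
    unfolding connected_graph_def
  proof (intro conjI ballI)
    show "W \<noteq> {}" unfolding W_def by auto
  next
    have hub: "(v,x) \<in> (adj_rel F)\<^sup>*" if x: "x \<in> W" for x
    proof (cases "x = v")
      case False
      then have xW: "x \<in> W'" using x unfolding W_def by auto
      have "(a,x) \<in> (adj_rel F')\<^sup>*" using WF(3) aW xW unfolding is_tree_def connected_graph_def by auto
      then have "(id a, id x) \<in> (adj_rel F)\<^sup>*"
      proof (rule rtrancl_map)
        fix p q assume pq: "{p,q} \<in> F'"
        show "(id p, id q) \<in> (adj_rel F)\<^sup>*"
        proof (cases "{p,q} = {a,b}")
          case True
          have va: "{v,a} \<in> F" "{a,v} \<in> F" and vb: "{v,b} \<in> F" "{b,v} \<in> F" unfolding F_def by (auto simp: insert_commute)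
          have "(a,b) \<in> (adj_rel F)\<^sup>*" using va vb
            by (meson adj_iff converse_rtrancl_into_rtrancl r_into_rtrancl)
          moreover have "(b,a) \<in> (adj_rel F)\<^sup>*" using va vb
            by (meson adj_iff converse_rtrancl_into_rtrancl r_into_rtrancl)
          moreover have "(p = a \<and> q = b) \<or> (p = b \<and> q = a)" using True by (auto simp: doubleton_eq_iff)
          ultimately show ?thesis by auto
        next
          case False
          then have "{p,q} \<in> F" using pq unfolding F_def by auto
          then show ?thesis by (auto intro!: r_into_rtrancl)
        qed
      qed
      then have ax: "(a,x) \<in> (adj_rel F)\<^sup>*" by simp
      have "(v,a) \<in> adj_rel F" unfolding F_def by simp
      from converse_rtrancl_into_rtrancl[OF this ax] show ?thesis .
    qed simp
    fix x y assume "x \<in> W" "y \<in> W"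
    then show "(x,y) \<in> (adj_rel F)\<^sup>*" using hub adj_sym by (meson rtrancl_trans)
  qed
  have nc: "\<not> (\<exists>C. is_cycle F C)"
  proof
    assume "\<exists>C. is_cycle F C"
    then have FeqE: "F = E" using cg_acyclic_iff[OF cg FE] by simp
    have "E' \<subseteq> F'"
    proof
      fix e assume e: "e \<in> E'"
      show "e \<in> F'"
      proof (cases "e = {a,b}")
        case True then show ?thesis using WF(4) by simp
      next
        case False
        then have eE: "e \<in> E" "v \<notin> e" using e unfolding E'_def dropv_def by auto
        then have "e \<in> F" using FeqE by simp
        moreover have "e \<noteq> {v,a}" "e \<noteq> {v,b}" using eE(2) by auto
        ultimately show ?thesis using False unfolding F_def by auto
      qed
    qed
    then have "F' = E'" using WF(2) by auto
    then have "\<exists>C. is_cycle F' C" using cg_acyclic_iff[OF cg' WF(2)] by simp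
    then show False using WF(3) unfolding is_tree_def by simp
  qed
  have "is_tree W F" using sg cn nc unfolding is_tree_def by simp
  moreover have "W \<subseteq> V" using WF(1) v unfolding W_def by auto
  moreover have "{v,a} \<in> F" "{v,b} \<in> F" unfolding F_def by auto
  ultimately show ?thesis unfolding S3_def subtrees_def pp W_def using FE by simp
qed

lemma chi_psi: "p \<in> S3 \<Longrightarrow> chi (psi p) = p"
proof -
  assume p: "p \<in> S3"
  obtain W F where pWF: "p = (W,F)" by fastforce
  have WF: "F \<subseteq> E" "{v,a} \<in> F" "{v,b} \<in> F" "v \<in> W"
    using p pWF unfolding S3_def subtrees_def by auto
  have "{a,b} \<notin> F" using WF(1) abE by auto
  then have "insert {v,a} (insert {v,b} (insert {a,b} (F - {{v,a},{v,b}}) - {{a,b}})) = F"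
    using WF(2,3) ab_ne by auto
  moreover have "insert v (W - {v}) = W" using WF(4) by auto
  ultimately show ?thesis unfolding chi_def psi_def pWF by simp
qed

lemma psi_chi: "p \<in> T' \<Longrightarrow> psi (chi p) = p"
proof -
  assume p: "p \<in> T'"
  obtain W F where pWF: "p = (W,F)" by fastforce
  have WF: "W \<subseteq> V - {v}" "F \<subseteq> E'" "{a,b} \<in> F"
    using p pWF unfolding T'_def subtrees_def by auto
  have "{v,a} \<notin> F" "{v,b} \<notin> F" using WF(2) E'_nov by auto
  then have "insert {a,b} (insert {v,a} (insert {v,b} (F - {{a,b}})) - {{v,a},{v,b}}) = F"
    using WF(3) ab_ne by auto
  moreover have "insert v W - {v} = W" using WF(1) by auto
  ultimately show ?thesis unfolding chi_def psi_def pWF by simp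
qed

lemma card_S3: "card S3 = card T'"
proof -
  have "bij_betw psi S3 T'"
    by (rule bij_betw_byWitness[of _ chi]) (use chi_psi psi_chi psi_maps chi_maps in auto)
  then show ?thesis by (rule bij_betw_same_card)
qed

lemma nG': "num_subtrees (V - {v}) E' = num_subtrees (V - {v}) (dropv E v) + card S3"
proof -
  have "simple_graph (V - {v}) E'" using cg' unfolding cyc_graph_def by simp
  from n_split_edge[OF this, of "{a,b}"] show ?thesis
    using E'_minus card_S3 unfolding T'_def by simp
qed

lemma cardV': "card (V - {v}) = k - 1" using cardP .

end

theorem cycle_count:
  "cyc_graph V E \<Longrightarrow> card V = k \<Longrightarrow> num_subtrees V E = k * k + 1"
proof (induction k arbitrary: V E)
  case 0
  have "finite V" "V \<noteq> {}" using 0 cg_basic[OF 0(1)] unfolding cyc_graph_def connected_graph_def by auto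
  then show ?case using 0 by simp
next
  case (Suc m)
  have "V \<noteq> {}" using Suc.prems unfolding cyc_graph_def connected_graph_def by auto
  then obtain v where v: "v \<in> V" by auto
  obtain a b where ab: "a \<noteq> b" "a \<noteq> v" "b \<noteq> v" "a \<in> V" "b \<in> V" "{e\<in>E. v\<in>e} = {{v,a},{v,b}}"
    using cg_nbrs[OF Suc.prems(1) v] by blast
  interpret cgv V E v a b "Suc m"
    by (unfold_locales) (use Suc.prems v ab in auto)
  have nd: "num_subtrees V E = num_subtrees (V - {v}) (dropv E v) + Suc m + m + card S3"
    using n_decomp by simp
  show ?case
  proof (cases "{a,b} \<in> E")
    case True
    have "card S3 = 1" "Suc m = 3" using S3_tri[OF True] by auto
    moreover have "2 * num_subtrees (V - {v}) (dropv E v) = m * (m + 1) + 2"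
      using path_counts[OF P cardP] by simp
    ultimately show ?thesis using nd by simp
  next
    case False
    interpret cgv4 V E v a b "Suc m"
      by (unfold_locales) (use False in auto)
    have "num_subtrees (V - {v}) E' = m * m + 1"
      using Suc.IH[OF cg'] cardV' by simp
    then show ?thesis using nd nG' by simp
  qed
qed

theorem cycle_tcount:
  assumes cg: "cyc_graph V E" and k: "card V = k" and x: "x \<in> V"
  shows "2 * tcount V E x = k * k + k"
proof -
  obtain a b where ab: "a \<noteq> b" "a \<noteq> x" "b \<noteq> x" "a \<in> V" "b \<in> V" "{e\<in>E. x\<in>e} = {{x,a},{x,b}}"
    using cg_nbrs[OF cg x] by blast
  interpret cgv V E x a b k
    by (unfold_locales) (use cg k x ab in auto)
  have "num_subtrees V E = num_subtrees (V - {x}) (dropv E x) + tcount V E x"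
    using n_split_vertex[OF s] by simp
  moreover have "2 * num_subtrees (V - {x}) (dropv E x) = (k - 1) * (k - 1 + 1) + 2"
    using path_counts[OF P cardP] by simp
  moreover have "num_subtrees V E = k * k + 1" using cycle_count[OF cg k] .
  moreover have "k \<ge> 3" using k3 .
  ultimately show ?thesis
  proof -
    assume A: "num_subtrees V E = num_subtrees (V - {x}) (dropv E x) + tcount V E x"
      and B: "2 * num_subtrees (V - {x}) (dropv E x) = (k - 1) * (k - 1 + 1) + 2"
      and C: "num_subtrees V E = k * k + 1" and D: "k \<ge> 3"
    define j where "j = k - 1"
    have j: "k = j + 1" using D unfolding j_def by simp
    have "2 * tcount V E x = 2 * (k * k + 1) - ((k - 1) * (k - 1 + 1) + 2)" using A B C by simp
    then show ?thesis using j by (simp add: algebra_simps)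
  qed
qed

lemma ar_pow: "2*(j+3) \<le> 3*(2::nat)^(j+1)"
  by (induction j) auto

lemma ar1: "(j+3)*(j+3) \<le> 3*(2::nat)^(j+1) + (j+3)"
proof (induction j)
  case 0 then show ?case by simp
next
  case (Suc j)
  have "(Suc j + 3) * (Suc j + 3) = (j+3)*(j+3) + 2*(j+3) + 1" by (simp add: algebra_simps)
  also have "\<dots> \<le> 3*2^(j+1) + (j+3) + 2*(j+3) + 1" using Suc.IH by simp
  also have "\<dots> \<le> 3*2^(j+1) + 3*2^(j+1) + (j+3) + 1" using ar_pow[of j] by simp
  also have "\<dots> = 3*2^(Suc j+1) + (Suc j + 3)" by simp
  finally show ?case .
qed

lemma ar2: "(j+3)*(j+3) + (j+3) \<le> 6*(2::nat)^(j+1)"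
proof (induction j)
  case 0 then show ?case by simp
next
  case (Suc j)
  have "(Suc j + 3) * (Suc j + 3) + (Suc j + 3) = ((j+3)*(j+3) + (j+3)) + 2*(j+3) + 2" by (simp add: algebra_simps)
  also have "\<dots> \<le> 6*2^(j+1) + 2*(j+3) + 2" using Suc.IH by simp
  also have "\<dots> \<le> 6*2^(j+1) + 6*2^(j+1)"
  proof -
    have "(2::nat) \<le> 3*2^(j+1)" by simp
    then show ?thesis using ar_pow[of j] by simp
  qed
  also have "\<dots> = 6*2^(Suc j+1)" by simp
  finally show ?case .
qed

lemma unicyclic_cycle:
  assumes "unicyclic V E"
  obtains C0 where "is_cycle E C0" "\<And>C. is_cycle E C \<Longrightarrow> C = C0"
  using assms unfolding unicyclic_def by blast

lemma unicyclic_card: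
  assumes u: "unicyclic V E"
  shows "card V \<ge> 3"
proof -
  obtain C0 where C0: "is_cycle E C0" using unicyclic_cycle[OF u] by blast
  have s: "simple_graph V E" using u unfolding unicyclic_def by simp
  have c2: "\<forall>f\<in>C0. card f = 2" "\<forall>f\<in>C0. f \<subseteq> V" using C0 s unfolding is_cycle_def simple_graph_def by auto
  have fin: "finite C0" using C0 unfolding is_cycle_def by simp
  obtain f where f: "f \<in> C0" using C0 unfolding is_cycle_def by auto
  then obtain p where p: "p \<in> f" using c2 by fastforce
  then have pU: "p \<in> \<Union>C0" using f by auto
  moreover have "\<forall>y\<in>\<Union>C0. card {e\<in>C0. y\<in>e} = 2" using C0 unfolding is_cycle_def by blast
  ultimately have "deg C0 p = 2" unfolding deg_def by blast
  then obtain a b where ab: "a \<noteq> b" "a \<noteq> p" "b \<noteq> p" "{e\<in>C0. p\<in>e} = {{p,a},{p,b}}"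
    using deg_two_edges[OF fin c2(1)] by blast
  then have "{p,a} \<in> C0" "{p,b} \<in> C0" by auto
  then have "{p,a,b} \<subseteq> V" using c2(2) by auto
  moreover have "finite V" using s unfolding simple_graph_def by simp
  ultimately have "card {p,a,b} \<le> card V" by (rule card_mono[rotated])
  then show ?thesis using ab by simp
qed

lemma conn_deg_pos:
  assumes s: "simple_graph V E" and c: "connected_graph V E" and cV: "card V \<ge> 2" and x: "x \<in> V"
  shows "deg E x \<ge> 1"
proof -
  have "finite V" using s unfolding simple_graph_def by simp
  then obtain y where y: "y \<in> V" "y \<noteq> x" using other_elem[OF _ cV x] by blast
  have "(x,y) \<in> (adj_rel E)\<^sup>*" using c x y unfolding connected_graph_def by auto
  then obtain z where "{x,z} \<in> E" using first_edge y(2) by metis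
  then have "x \<in> \<Union>E" by auto
  then show ?thesis using deg_pos[OF simple_finE[OF s]] by simp
qed

lemma unicyclic_noleaf:
  assumes u: "unicyclic V E" and nl: "\<forall>x\<in>V. deg E x \<noteq> 1"
  shows "cyc_graph V E"
proof -
  have s: "simple_graph V E" and c: "connected_graph V E" using u unfolding unicyclic_def by auto
  obtain C0 where C0: "is_cycle E C0" and un: "\<And>C. is_cycle E C \<Longrightarrow> C = C0" using unicyclic_cycle[OF u] by blast
  have finE: "finite E" using simple_finE[OF s] .
  have finV: "finite V" using s unfolding simple_graph_def by simp
  have c2: "\<forall>f\<in>E. card f = 2" and sub: "\<forall>f\<in>E. f \<subseteq> V" using s unfolding simple_graph_def by auto
  have cV: "card V \<ge> 3" using unicyclic_card[OF u] .
  have dge: "\<forall>x\<in>V. deg E x \<ge> 2"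
  proof
    fix x assume x: "x \<in> V"
    have "deg E x \<ge> 1" using conn_deg_pos[OF s c _ x] cV by simp
    then show "deg E x \<ge> 2" using nl x by fastforce
  qed
  obtain e where e: "e \<in> C0" using C0 unfolding is_cycle_def by auto
  have eE: "e \<in> E" using C0 e unfolding is_cycle_def by auto
  have cE: "card E \<le> card V"
  proof (cases "E - {e} = {}")
    case True
    then have "E = {e}" using eE by auto
    then show ?thesis using cV by simp
  next
    case False
    have nc: "\<not> (\<exists>C. is_cycle (E - {e}) C)"
    proof
      assume "\<exists>C. is_cycle (E - {e}) C"
      then obtain C where C: "is_cycle (E - {e}) C" by blast
      then have "is_cycle E C" using is_cycle_mono by (metis Diff_subset)
      then have "C = C0" using un by simp
      then show False using C e unfolding is_cycle_def by auto
    qed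
    have "card (E - {e}) < card (\<Union>(E - {e}))"
      using acyclic_count[of "E - {e}"] finE c2 False nc by auto
    moreover have "card (\<Union>(E - {e})) \<le> card V" using sub finV by (intro card_mono) auto
    moreover have "card (E - {e}) = card E - 1" using eE finE by simp
    moreover have "card E \<ge> 1" using eE finE by (metis One_nat_def Suc_leI card_gt_0_iff empty_iff)
    ultimately show ?thesis by linarith
  qed
  have hs: "(\<Sum>y\<in>V. deg E y) = 2 * card E" using handshake[OF finE finV] c2 sub by auto
  have d2: "\<forall>x\<in>V. deg E x = 2"
  proof (rule ccontr)
    assume "\<not> (\<forall>x\<in>V. deg E x = 2)"
    then obtain w where w: "w \<in> V" "deg E w \<ge> 3" using dge by force
    have s1: "(\<Sum>y\<in>V. deg E y) = deg E w + (\<Sum>y\<in>V - {w}. deg E y)"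
      using w(1) finV by (simp add: sum.remove)
    have s2: "(\<Sum>y\<in>V - {w}. deg E y) \<ge> (\<Sum>y\<in>V - {w}. 2)"
      using dge by (intro sum_mono) auto
    have s3: "(\<Sum>y\<in>V - {w}. (2::nat)) = 2 * (card V - 1)"
      using w(1) finV by simp
    define A where "A = (\<Sum>y\<in>V - {w}. deg E y)"
    define k where "k = card V"
    have "2 * card E = deg E w + A" using hs s1 unfolding A_def by simp
    moreover have "A \<ge> 2 * (k - 1)" using s2 s3 unfolding A_def k_def by simp
    moreover have "k \<ge> 3" "card E \<le> k" using cV cE unfolding k_def by auto
    ultimately show False using w(2) by linarith
  qed
  show ?thesis using s c d2 unfolding cyc_graph_def by simp
qed

lemma unicyclic_leaf:
  assumes u: "unicyclic V E" and v: "v \<in> V" and uV: "u \<in> V" "u \<noteq> v" and lf: "{e\<in>E. v\<in>e} = {{u,v}}"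
  shows "unicyclic (V - {v}) (dropv E v)"
proof -
  have s: "simple_graph V E" and c: "connected_graph V E" using u unfolding unicyclic_def by auto
  obtain C0 where C0: "is_cycle E C0" and un: "\<And>C. is_cycle E C \<Longrightarrow> C = C0" using unicyclic_cycle[OF u] by blast
  have s': "simple_graph (V - {v}) (dropv E v)" using s unfolding simple_graph_def dropv_def by auto
  have c': "connected_graph (V - {v}) (dropv E v)"
    using conn_leaf_remove[OF c v uV(1) uV(2)] lf by simp
  have "\<forall>e\<in>C0. v \<notin> e" using cycle_avoid[OF C0] lf by (metis order_refl)
  then have "C0 \<subseteq> dropv E v" using C0 unfolding is_cycle_def dropv_def by auto
  then have C0': "is_cycle (dropv E v) C0" using is_cycle_sub[OF C0] by simp
  have "\<And>C. is_cycle (dropv E v) C \<Longrightarrow> C = C0"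
  proof -
    fix C assume "is_cycle (dropv E v) C"
    then have "is_cycle E C" using is_cycle_mono unfolding dropv_def by (metis (no_types, lifting) mem_Collect_eq subsetI)
    then show "C = C0" by (rule un)
  qed
  then show ?thesis using s' c' C0' unfolding unicyclic_def by blast
qed

lemma unicyclic_pair:
  assumes u: "unicyclic V E" and x: "x \<in> V" and y: "y \<in> V"
  shows "card {p\<in>subtrees V E. y \<in> fst p \<and> x \<in> fst p} \<ge> 1"
proof -
  have s: "simple_graph V E" and c: "connected_graph V E" using u unfolding unicyclic_def by auto
  obtain C0 where C0: "is_cycle E C0" and un: "\<And>C. is_cycle E C \<Longrightarrow> C = C0" using unicyclic_cycle[OF u] by blast
  have c2C: "\<forall>f\<in>C0. card f = 2" using C0 s unfolding is_cycle_def simple_graph_def by auto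
  obtain e where e: "e \<in> C0" using C0 unfolding is_cycle_def by auto
  then obtain p q where pq: "p \<noteq> q" "e = {p,q}" using c2C by (meson card_2_iff)
  have eE: "e \<in> E" using C0 e unfolding is_cycle_def by auto
  have "(p,q) \<in> (adj_rel (C0 - {{p,q}}))\<^sup>*" using cycle_minus_edge[OF C0 c2C] e pq by simp
  moreover have "C0 - {{p,q}} \<subseteq> E - {e}" using C0 pq unfolding is_cycle_def by auto
  ultimately have pq1: "(p,q) \<in> (adj_rel (E - {e}))\<^sup>*" by (rule rtrancl_mono_adj[rotated])
  have cn: "connected_graph V (E - {e})"
    unfolding connected_graph_def
  proof (intro conjI ballI)
    show "V \<noteq> {}" using x by auto
  next
    fix a b assume ab: "a \<in> V" "b \<in> V"
    have "(a,b) \<in> (adj_rel E)\<^sup>*" using c ab unfolding connected_graph_def by auto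
    then have "(id a, id b) \<in> (adj_rel (E - {e}))\<^sup>*"
    proof (rule rtrancl_map)
      fix p' q' assume pq': "{p',q'} \<in> E"
      show "(id p', id q') \<in> (adj_rel (E - {e}))\<^sup>*"
      proof (cases "{p',q'} = e")
        case True
        then have "(p' = p \<and> q' = q) \<or> (p' = q \<and> q' = p)" using pq by (auto simp: doubleton_eq_iff)
        then show ?thesis using pq1 adj_sym by auto
      next
        case False
        then show ?thesis using pq' by (auto intro!: r_into_rtrancl)
      qed
    qed
    then show "(a,b) \<in> (adj_rel (E - {e}))\<^sup>*" by simp
  qed
  have nc: "\<not> (\<exists>C. is_cycle (E - {e}) C)"
  proof
    assume "\<exists>C. is_cycle (E - {e}) C"
    then obtain C where C: "is_cycle (E - {e}) C" by blast
    then have "is_cycle E C" using is_cycle_mono by (metis Diff_subset)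
    then have "C = C0" using un by simp
    then show False using C e unfolding is_cycle_def by auto
  qed
  have sg: "simple_graph V (E - {e})" using s unfolding simple_graph_def by auto
  have "is_tree V (E - {e})" using sg cn nc unfolding is_tree_def by simp
  then have "(V, E - {e}) \<in> {p\<in>subtrees V E. y \<in> fst p \<and> x \<in> fst p}" using x y unfolding subtrees_def by auto
  moreover have "finite {p\<in>subtrees V E. y \<in> fst p \<and> x \<in> fst p}" using finite_subtrees[OF s] by simp
  ultimately have "card {p\<in>subtrees V E. y \<in> fst p \<and> x \<in> fst p} \<noteq> 0" by (simp add: card_eq_0_iff) blast
  then show ?thesis by simp
qed

lemma sq_ge: "(j::nat) \<le> j * j" by (cases j) auto

theorem main_bounds:
  "unicyclic V E \<Longrightarrow> card V = N \<Longrightarrow>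
   num_subtrees V E \<le> 3 * 2^(N-2) + N + 1 \<and> (\<forall>x\<in>V. tcount V E x \<le> 3 * 2^(N-2)) \<and>
   N*N + 7*N \<le> 2 * num_subtrees V E + 10 \<and> (\<forall>x\<in>V. N + 3 \<le> tcount V E x)"
proof (induction N arbitrary: V E)
  case 0
  then show ?case using unicyclic_card[OF 0(1)] by simp
next
  case (Suc M)
  note uni = Suc.prems(1)
  have N3: "Suc M \<ge> 3" using unicyclic_card[OF uni] Suc.prems(2) by simp
  have s: "simple_graph V E" using uni unfolding unicyclic_def by simp
  show ?case
  proof (cases "\<exists>v\<in>V. deg E v = 1")
    case False
    have cg: "cyc_graph V E" using unicyclic_noleaf[OF uni] False by blast
    have n: "num_subtrees V E = Suc M * Suc M + 1" using cycle_count[OF cg Suc.prems(2)] .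
    have t: "\<forall>x\<in>V. 2 * tcount V E x = Suc M * Suc M + Suc M" using cycle_tcount[OF cg Suc.prems(2)] by blast
    define j where "j = Suc M - 3"
    have Nj: "Suc M = j + 3" using N3 unfolding j_def by simp
    have pw: "(2::nat)^(Suc M - 2) = 2^(j+1)" using Nj by simp
    have a1: "(j+3)*(j+3) \<le> 3*(2::nat)^(j+1) + (j+3)" by (rule ar1)
    have a2: "(j+3)*(j+3) + (j+3) \<le> 6*(2::nat)^(j+1)" by (rule ar2)
    have jj: "j \<le> j * j" by (rule sq_ge)
    have e1: "(j+3)*(j+3) = j*j + 6*j + 9" by (simp add: algebra_simps)
    have A: "num_subtrees V E \<le> 3 * 2^(Suc M - 2) + Suc M + 1" using n pw a1 Nj by simp
    have B: "\<forall>x\<in>V. tcount V E x \<le> 3 * 2^(Suc M - 2)"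
    proof
      fix x assume "x \<in> V"
      then have "2 * tcount V E x = (j+3)*(j+3) + (j+3)" using t Nj by simp
      then show "tcount V E x \<le> 3 * 2^(Suc M - 2)" using a2 pw by simp
    qed
    have C: "Suc M * Suc M + 7 * Suc M \<le> 2 * num_subtrees V E + 10"
      using n Nj e1 jj by simp
    have D: "\<forall>x\<in>V. Suc M + 3 \<le> tcount V E x"
    proof
      fix x assume "x \<in> V"
      then have "2 * tcount V E x = (j+3)*(j+3) + (j+3)" using t Nj by simp
      then show "Suc M + 3 \<le> tcount V E x" using Nj e1 jj by simp
    qed
    show ?thesis using A B C D by blast
  next
    case True
    then obtain v where v: "v \<in> V" "deg E v = 1" by blast
    obtain w where w: "w \<in> V" "w \<noteq> v" "{e\<in>E. v\<in>e} = {{w,v}}" using leaf_nbr[OF s v] by blast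
    interpret leafsetting V E w v using leafsetting_intro[OF s v(1) w(1,2) w(3)] .
    have uH: "unicyclic (V - {v}) (dropv E v)" using unicyclic_leaf[OF uni v(1) w(1,2) w(3)] .
    have cH: "card (V - {v}) = M" using Suc.prems(2) v(1) by simp
    note IH = Suc.IH[OF uH cH]
    have M3: "M \<ge> 3" using unicyclic_card[OF uH] cH by simp
    define j where "j = M - 3"
    have Mj: "M = j + 3" using M3 unfolding j_def by simp
    have pwN: "(2::nat)^(Suc M - 2) = 2 * 2^(j+1)" using Mj by simp
    have pwM: "(2::nat)^(M - 2) = 2^(j+1)" using Mj by simp
    have wH: "w \<in> V - {v}" using w by simp
    have tw: "tcount (V - {v}) (dropv E v) w \<le> 3 * 2^(j+1)" "M + 3 \<le> tcount (V - {v}) (dropv E v) w"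
      using IH wH pwM by auto
    have nH: "num_subtrees (V - {v}) (dropv E v) \<le> 3 * 2^(j+1) + M + 1"
      "M*M + 7*M \<le> 2 * num_subtrees (V - {v}) (dropv E v) + 10"
      using IH pwM by auto
    have A: "num_subtrees V E \<le> 3 * 2^(Suc M - 2) + Suc M + 1"
      using count_n nH(1) tw(1) pwN by simp
    have C: "Suc M * Suc M + 7 * Suc M \<le> 2 * num_subtrees V E + 10"
    proof -
      have "Suc M * Suc M + 7 * Suc M = M*M + 7*M + 2*M + 8" by (simp add: algebra_simps)
      then show ?thesis using count_n nH(2) tw(2) by simp
    qed
    have BD: "tcount V E x \<le> 3 * 2^(Suc M - 2) \<and> Suc M + 3 \<le> tcount V E x" if x: "x \<in> V" for x
    proof (cases "x = v")
      case True
      then show ?thesis using count_tv tw pwN by simp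
    next
      case False
      then have xH: "x \<in> V - {v}" using x by simp
      have "tcount (V - {v}) (dropv E v) x \<le> 3 * 2^(j+1)" "M + 3 \<le> tcount (V - {v}) (dropv E v) x"
        using IH xH pwM by auto
      moreover have "tcount V E x \<le> 2 * tcount (V - {v}) (dropv E v) x" using count_tx_le[OF False] .
      moreover have "card {p\<in>subtrees (V - {v}) (dropv E v). w \<in> fst p \<and> x \<in> fst p} \<ge> 1"
        using unicyclic_pair[OF uH xH wH] .
      moreover have "tcount V E x = tcount (V - {v}) (dropv E v) x + card {p\<in>subtrees (V - {v}) (dropv E v). w \<in> fst p \<and> x \<in> fst p}"
        using count_tx[OF False] .
      ultimately show ?thesis using pwN by simp
    qed
    show ?thesis using A C BD by blast
  qed
qed

lemma tri_cg: "cyc_graph {0,1,2::nat} {{0,1},{0,2},{1,2}}"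
proof -
  have sg: "simple_graph {0,1,2::nat} {{0,1},{0,2},{1,2}}" unfolding simple_graph_def by auto
  have cn: "connected_graph {0,1,2::nat} {{0,1},{0,2},{1,2}}"
    unfolding connected_graph_def
  proof (intro conjI ballI)
    show "{0,1,2::nat} \<noteq> {}" by simp
  next
    have hub: "(0,x) \<in> (adj_rel {{0,1},{0,2},{1,2::nat}})\<^sup>*" if "x \<in> {0,1,2::nat}" for x
    proof (cases "x = 0")
      case False
      then have "x = 1 \<or> x = 2" using that by auto
      then show ?thesis by (auto intro!: r_into_rtrancl)
    qed simp
    fix x y assume "x \<in> {0,1,2::nat}" "y \<in> {0,1,2::nat}"
    then show "(x,y) \<in> (adj_rel {{0,1},{0,2},{1,2::nat}})\<^sup>*" using hub adj_sym by (meson rtrancl_trans)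
  qed
  have d: "deg {{0,1},{0,2},{1,2}} x = 2" if x: "x \<in> {0,1,2::nat}" for x
  proof -
    consider "x = 0" | "x = 1" | "x = 2" using x by auto
    then show ?thesis
    proof cases
      case 1
      then have "{e\<in>{{0,1},{0,2},{1,2::nat}}. x\<in>e} = {{0,1},{0,2}}" by auto
      then show ?thesis unfolding deg_def by (simp add: doubleton_eq_iff)
    next
      case 2
      then have "{e\<in>{{0,1},{0,2},{1,2::nat}}. x\<in>e} = {{0,1},{1,2}}" by auto
      then show ?thesis unfolding deg_def by (simp add: doubleton_eq_iff)
    next
      case 3
      then have "{e\<in>{{0,1},{0,2},{1,2::nat}}. x\<in>e} = {{0,2},{1,2}}" by auto
      then show ?thesis unfolding deg_def by (simp add: doubleton_eq_iff)
    qed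
  qed
  show ?thesis using sg cn d unfolding cyc_graph_def by blast
qed

lemma V3: "US_V 3 = {0,1,2}" "UP_V 3 = {0,1,2}"
  unfolding US_V_def UP_V_def by auto

lemma US3: "US_E 3 = {{0,1},{0,2},{1,2}}"
proof -
  have "{{0, i} | i::nat. 1 \<le> i \<and> i < 3} = {{0,1},{0,2}}"
  proof (intro set_eqI iffI)
    fix e assume "e \<in> {{0, i} | i::nat. 1 \<le> i \<and> i < 3}"
    then obtain i where "e = {0,i}" "1 \<le> i" "i < (3::nat)" by blast
    then have "i = 1 \<or> i = 2" by auto
    then show "e \<in> {{0,1},{0,2}}" using \<open>e = {0,i}\<close> by auto
  next
    fix e assume "e \<in> {{0::nat,1},{0,2}}"
    then show "e \<in> {{0, i} | i::nat. 1 \<le> i \<and> i < 3}" by auto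
  qed
  then show ?thesis unfolding US_E_def by auto
qed

lemma UP3: "UP_E 3 = {{0,1},{0,2},{1,2}}"
proof -
  have "{{i, i + 1} | i::nat. 2 \<le> i \<and> i + 1 < 3} = {}" by auto
  then show ?thesis unfolding UP_E_def by auto
qed

lemma US_simple: "m \<ge> 3 \<Longrightarrow> simple_graph (US_V m) (US_E m)"
  unfolding simple_graph_def US_V_def US_E_def by auto

lemma UP_simple: "m \<ge> 3 \<Longrightarrow> simple_graph (UP_V m) (UP_E m)"
  unfolding simple_graph_def UP_V_def UP_E_def by auto

lemma US_step:
  assumes "m \<ge> 3"
  shows "{e\<in>US_E (Suc m). m\<in>e} = {{0,m}}" "US_V (Suc m) - {m} = US_V m" "dropv (US_E (Suc m)) m = US_E m"
proof -
  show "{e\<in>US_E (Suc m). m\<in>e} = {{0,m}}"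
    using assms unfolding US_E_def by auto
  show "US_V (Suc m) - {m} = US_V m" unfolding US_V_def by auto
  show "dropv (US_E (Suc m)) m = US_E m"
    using assms unfolding US_E_def dropv_def by auto
qed

lemma UP_step:
  assumes "m \<ge> 3"
  shows "{e\<in>UP_E (Suc m). m\<in>e} = {{m-1,m}}" "UP_V (Suc m) - {m} = UP_V m" "dropv (UP_E (Suc m)) m = UP_E m"
proof -
  show "{e\<in>UP_E (Suc m). m\<in>e} = {{m-1,m}}"
  proof (intro set_eqI iffI)
    fix e assume "e \<in> {e\<in>UP_E (Suc m). m\<in>e}"
    then show "e \<in> {{m-1,m}}" using assms unfolding UP_E_def by auto
  next
    fix e assume "e \<in> {{m-1,m}}"
    then have e: "e = {m-1, m}" by simp
    have "{m-1, m} \<in> {{i, i+1} | i. 2 \<le> i \<and> i+1 < Suc m}"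
      by (rule CollectI, rule exI[of _ "m-1"]) (use assms in simp)
    then show "e \<in> {e\<in>UP_E (Suc m). m\<in>e}" unfolding UP_E_def e by simp
  qed
  show "UP_V (Suc m) - {m} = UP_V m" unfolding UP_V_def by auto
  show "dropv (UP_E (Suc m)) m = UP_E m"
    using assms unfolding UP_E_def dropv_def by auto
qed

lemma US_counts:
  "m \<ge> 3 \<Longrightarrow> tcount (US_V m) (US_E m) 0 = 3 * 2^(m-2) \<and> num_subtrees (US_V m) (US_E m) = 3 * 2^(m-2) + m + 1"
proof (induction m rule: nat_induct_at_least)
  case base
  have cg: "cyc_graph (US_V 3) (US_E 3)" using tri_cg V3 US3 by simp
  have c: "card (US_V 3) = 3" unfolding US_V_def by simp
  have "0 \<in> US_V 3" unfolding US_V_def by simp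
  then have "2 * tcount (US_V 3) (US_E 3) 0 = 12" using cycle_tcount[OF cg c] by simp
  moreover have "num_subtrees (US_V 3) (US_E 3) = 10" using cycle_count[OF cg c] by simp
  ultimately show ?case by simp
next
  case (Suc m)
  note st = US_step[OF Suc.hyps(1)]
  have lf: "{e\<in>US_E (Suc m). m\<in>e} = {{0,m}}" using st(1) .
  have sgU: "simple_graph (US_V (Suc m)) (US_E (Suc m))" using US_simple[of "Suc m"] Suc.hyps by simp
  interpret leafsetting "US_V (Suc m)" "US_E (Suc m)" 0 m
    by (rule leafsetting_intro[OF sgU _ _ _ lf]) (use Suc.hyps in \<open>auto simp: US_V_def\<close>)
  have n: "num_subtrees (US_V (Suc m)) (US_E (Suc m)) = num_subtrees (US_V m) (US_E m) + 1 + tcount (US_V m) (US_E m) 0"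
    using count_n st by simp
  have t: "tcount (US_V (Suc m)) (US_E (Suc m)) 0 = tcount (US_V m) (US_E m) 0 + card {p\<in>subtrees (US_V m) (US_E m). 0 \<in> fst p \<and> 0 \<in> fst p}"
    using count_tx[of 0] st Suc.hyps by simp
  have "Suc m - 2 = Suc (m - 2)" using Suc.hyps by simp
  then have pw: "(2::nat)^(Suc m - 2) = 2 * 2^(m-2)" by simp
  show ?case using n t Suc.IH pw unfolding tcount_def by simp
qed

lemma UP_counts:
  "m \<ge> 3 \<Longrightarrow> tcount (UP_V m) (UP_E m) (m-1) = m + 3 \<and> 2 * num_subtrees (UP_V m) (UP_E m) + 10 = m * m + 7 * m"
proof (induction m rule: nat_induct_at_least)
  case base
  have cg: "cyc_graph (UP_V 3) (UP_E 3)" using tri_cg V3 UP3 by simp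
  have c: "card (UP_V 3) = 3" unfolding UP_V_def by simp
  have "2 \<in> UP_V 3" unfolding UP_V_def by simp
  then have "2 * tcount (UP_V 3) (UP_E 3) 2 = 12" using cycle_tcount[OF cg c] by simp
  moreover have "num_subtrees (UP_V 3) (UP_E 3) = 10" using cycle_count[OF cg c] by simp
  ultimately show ?case by simp
next
  case (Suc m)
  note st = UP_step[OF Suc.hyps(1)]
  have sgU: "simple_graph (UP_V (Suc m)) (UP_E (Suc m))" using UP_simple[of "Suc m"] Suc.hyps by simp
  interpret leafsetting "UP_V (Suc m)" "UP_E (Suc m)" "m-1" m
    by (rule leafsetting_intro[OF sgU _ _ _ st(1)]) (use Suc.hyps in \<open>auto simp: UP_V_def\<close>)
  have n: "num_subtrees (UP_V (Suc m)) (UP_E (Suc m)) = num_subtrees (UP_V m) (UP_E m) + 1 + tcount (UP_V m) (UP_E m) (m-1)"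
    using count_n st by simp
  have t: "tcount (UP_V (Suc m)) (UP_E (Suc m)) m = 1 + tcount (UP_V m) (UP_E m) (m-1)"
    using count_tv st by simp
  have e: "Suc m * Suc m + 7 * Suc m = m * m + 7 * m + 2 * m + 8" by (simp add: algebra_simps)
  show ?case using n t Suc.IH e by simp
qed

theorem theorem1:
  fixes V :: "'a set" and E :: "'a set set" and n :: nat
  assumes "n \<ge> 3" and "unicyclic V E" and "card V = n"
  shows "num_subtrees (US_V n) (US_E n) \<ge> num_subtrees V E \<and>
         num_subtrees V E \<ge> num_subtrees (UP_V n) (UP_E n)"
proof -
  note mb = main_bounds[OF assms(2,3)]
  have "num_subtrees (US_V n) (US_E n) = 3 * 2^(n-2) + n + 1" using US_counts[OF assms(1)] by simp
  moreover have "2 * num_subtrees (UP_V n) (UP_E n) + 10 = n * n + 7 * n" using UP_counts[OF assms(1)] by simp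
  ultimately show ?thesis using mb by linarith
qed

end
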